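(* Let $\epsilon>0$ and $k=b/((1+\epsilon)\ln b)$, and let $T_w=8(b+1)\ln b$. For the maximal one-step coupling $(X_t,Y_t)$ of the Glauber dynamics on proper $k$-colorings of the star graph $G^*$ started from any pair $(x_0,y_0)$, with probability tending to $1$ as $b\to\infty$ (uniformly over the initial pair), every leaf $\ell_i$ with $X_{T_w}(\ell_i)\ne Y_{T_w}(\ell_i)$ satisfies $X_{T_w}(\ell_i)=Y_{T_w}(r)$ and $Y_{T_w}(\ell_i)=X_{T_w}(r)$.
   Context: $G^*$: star graph with root $r$ and leaves $\ell_1,\dots,\ell_b$. Heat-bath Glauber dynamics for proper $k$-colorings: choose a uniform vertex $v$ and recolor it uniformly from its available colors $A_\sigma(v)=\{c: c\ne\sigma(u)\ \forall u\sim v\}$. The maximal one-step coupling: both chains choose the same uniformly random vertex $v$; for each $c\in A_{X_t}(v)\cap A_{Y_t}(v)$, with probability $1/\max\{|A_{X_t}(v)|,|A_{Y_t}(v)|\}$ both set $v$ to $c$; otherwise the colors are chosen from the correct marginals, coupled arbitrarily. *)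

theory Defs
  imports "HOL-Probability.Probability"
begin

text \<open>Star graph with b leaves: vertices 0..b, root = 0, leaves 1..b.
  Colours are 0..k-1. A colouring is a function nat => nat (only its values on
  the vertex set matter).\<close>

definition star_vertices :: "nat \<Rightarrow> nat set" where
  "star_vertices b = {0..b}"

definition star_adj :: "nat \<Rightarrow> nat \<Rightarrow> nat \<Rightarrow> bool" where
  "star_adj b u v \<longleftrightarrow> (u = 0 \<and> v \<in> {1..b}) \<or> (v = 0 \<and> u \<in> {1..b})"

definition proper_coloring :: "nat \<Rightarrow> nat \<Rightarrow> (nat \<Rightarrow> nat) \<Rightarrow> bool" where
  "proper_coloring b k \<sigma> \<longleftrightarrow>
     (\<forall>v\<in>star_vertices b. \<sigma> v < k) \<and>
     (\<forall>u\<in>star_vertices b. \<forall>v\<in>star_vertices b. star_adj b u v \<longrightarrow> \<sigma> u \<noteq> \<sigma> v)"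

definition avail :: "nat \<Rightarrow> nat \<Rightarrow> (nat \<Rightarrow> nat) \<Rightarrow> nat \<Rightarrow> nat set" where
  "avail b k \<sigma> v = {c \<in> {0..<k}. \<forall>u\<in>star_vertices b. star_adj b v u \<longrightarrow> c \<noteq> \<sigma> u}"

text \<open>A one-step colour coupling at vertex v for states x, y is a maximal one-step
  coupling: its marginals are uniform on the available colour sets, and each common
  available colour c is chosen by both with probability exactly 1/max(|A_x(v)|,|A_y(v)|).
  (The remaining mass is coupled arbitrarily.)\<close>
definition maximal_color_coupling ::
  "nat \<Rightarrow> nat \<Rightarrow> (nat \<Rightarrow> nat) \<Rightarrow> (nat \<Rightarrow> nat) \<Rightarrow> nat \<Rightarrow> (nat \<times> nat) pmf \<Rightarrow> bool" where
  "maximal_color_coupling b k x y v q \<longleftrightarrow>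
     map_pmf fst q = pmf_of_set (avail b k x v) \<and>
     map_pmf snd q = pmf_of_set (avail b k y v) \<and>
     (\<forall>c \<in> avail b k x v \<inter> avail b k y v.
        pmf q (c, c) = 1 / real (max (card (avail b k x v)) (card (avail b k y v))))"

definition maximal_coupling_choice ::
  "nat \<Rightarrow> nat \<Rightarrow> ((nat \<Rightarrow> nat) \<Rightarrow> (nat \<Rightarrow> nat) \<Rightarrow> nat \<Rightarrow> (nat \<times> nat) pmf) \<Rightarrow> bool" where
  "maximal_coupling_choice b k Q \<longleftrightarrow>
     (\<forall>x y. proper_coloring b k x \<longrightarrow> proper_coloring b k y \<longrightarrow>
        (\<forall>v\<in>star_vertices b. maximal_color_coupling b k x y v (Q x y v)))"

definition coupled_step ::
  "nat \<Rightarrow> ((nat \<Rightarrow> nat) \<Rightarrow> (nat \<Rightarrow> nat) \<Rightarrow> nat \<Rightarrow> (nat \<times> nat) pmf) \<Rightarrow>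
   (nat \<Rightarrow> nat) \<times> (nat \<Rightarrow> nat) \<Rightarrow> ((nat \<Rightarrow> nat) \<times> (nat \<Rightarrow> nat)) pmf" where
  "coupled_step b Q s =
     (case s of (x, y) \<Rightarrow>
       pmf_of_set (star_vertices b) \<bind> (\<lambda>v.
         map_pmf (\<lambda>(c, d). (x(v := c), y(v := d))) (Q x y v)))"

primrec coupled_dist ::
  "nat \<Rightarrow> ((nat \<Rightarrow> nat) \<Rightarrow> (nat \<Rightarrow> nat) \<Rightarrow> nat \<Rightarrow> (nat \<times> nat) pmf) \<Rightarrow>
   (nat \<Rightarrow> nat) \<Rightarrow> (nat \<Rightarrow> nat) \<Rightarrow> nat \<Rightarrow> ((nat \<Rightarrow> nat) \<times> (nat \<Rightarrow> nat)) pmf" where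
  "coupled_dist b Q x0 y0 0 = return_pmf (x0, y0)"
| "coupled_dist b Q x0 y0 (Suc t) = coupled_dist b Q x0 y0 t \<bind> coupled_step b Q"

definition num_colors :: "real \<Rightarrow> nat \<Rightarrow> nat" where
  "num_colors \<epsilon> b = nat \<lfloor>real b / ((1 + \<epsilon>) * ln (real b))\<rfloor>"

definition T_w :: "nat \<Rightarrow> nat" where
  "T_w b = nat \<lceil>8 * (real b + 1) * ln (real b)\<rceil>"

definition swap_event :: "nat \<Rightarrow> ((nat \<Rightarrow> nat) \<times> (nat \<Rightarrow> nat)) set" where
  "swap_event b = {(X, Y). \<forall>i\<in>{1..b}. X i \<noteq> Y i \<longrightarrow> X i = Y 0 \<and> Y i = X 0}"

end

theory Submission imports Defs "HOL-Real_Asymp.Real_Asymp" begin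

lemma integrable_bnd_pmf:
  fixes f :: "'a \<Rightarrow> real"
  assumes "\<And>x. \<bar>f x\<bar> \<le> B"
  shows "integrable (measure_pmf M) f"
  by (rule measure_pmf.integrable_const_bound[where B=B]) (auto simp: assms)

lemma expectation_bind_pmf:
  fixes f :: "'a \<Rightarrow> real"
  assumes "\<And>x. \<bar>f x\<bar> \<le> B"
  shows "measure_pmf.expectation (bind_pmf M N) f =
         measure_pmf.expectation M (\<lambda>x. measure_pmf.expectation (N x) f)"
  unfolding measure_pmf_bind
  by (rule integral_bind[where K="count_space UNIV" and B=B and B'=1])
     (auto simp: assms measure_pmf.emeasure_space_1 intro!: prob_space_imp_subprob_space
       measure_pmf.prob_space_axioms AE_pmfI prob_space.finite_measure
       simp: space_subprob_algebra)

lemma expectation_mono_supp: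
  fixes f g :: "'a \<Rightarrow> real"
  assumes "\<And>x. \<bar>f x\<bar> \<le> B" "\<And>x. \<bar>g x\<bar> \<le> B'" "\<And>x. x \<in> set_pmf M \<Longrightarrow> f x \<le> g x"
  shows "measure_pmf.expectation M f \<le> measure_pmf.expectation M g"
  by (rule integral_mono_AE) (auto intro!: integrable_bnd_pmf assms AE_pmfI)

lemma expectation_le_const_supp:
  fixes f :: "'a \<Rightarrow> real"
  assumes "\<And>x. \<bar>f x\<bar> \<le> B" "\<And>x. x \<in> set_pmf M \<Longrightarrow> f x \<le> c"
  shows "measure_pmf.expectation M f \<le> c"
proof -
  have "measure_pmf.expectation M f \<le> measure_pmf.expectation M (\<lambda>_. c)"
    by (rule expectation_mono_supp[where B=B and B'="\<bar>c\<bar>"]) (auto simp: assms)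
  then show ?thesis by simp
qed


lemma bernoulli_pow:
  fixes t d :: real
  assumes "0 \<le> t" "0 \<le> d"
  shows "t ^ m + real m * t ^ (m - 1) * d \<le> (t + d) ^ m"
proof (induction m)
  case 0 then show ?case by simp
next
  case (Suc m)
  have "(t + d) ^ Suc m = (t + d) * (t + d) ^ m" by simp
  also have "\<dots> \<ge> (t + d) * (t ^ m + real m * t ^ (m - 1) * d)"
    using Suc.IH assms by (intro mult_left_mono) auto
  finally have 1: "(t + d) * (t ^ m + real m * t ^ (m - 1) * d) \<le> (t + d) ^ Suc m" .
  have 2: "t * t ^ (m - 1) = t ^ m" if "m \<ge> 1" using that
    by (metis Suc_diff_le diff_Suc_1 power_Suc)
  have "t ^ Suc m + real (Suc m) * t ^ (Suc m - 1) * d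
      \<le> (t + d) * (t ^ m + real m * t ^ (m - 1) * d)"
  proof (cases "m = 0")
    case True then show ?thesis using assms by simp
  next
    case False
    then have "t * t ^ (m - 1) = t ^ m" using 2 by simp
    then have "(t + d) * (t ^ m + real m * t ^ (m - 1) * d) =
        t ^ Suc m + real (Suc m) * t ^ m * d + real m * t ^ (m - 1) * d * d"
      by (simp add: algebra_simps)
    moreover have "0 \<le> real m * t ^ (m - 1) * d * d" using assms by simp
    ultimately show ?thesis by simp
  qed
  then show ?case using 1 by linarith
qed

lemma alg_ineq:
  fixes p th :: real and b m :: nat
  assumes p: "0 < p" "p \<le> 1/2" and th: "0 \<le> th" "th \<le> 1" and m: "m \<le> b"
  defines "lam \<equiv> 1 - real b * p / real (b + 1) * (1 - th)"
  defines "nx \<equiv> th + (1 - th) * ((1 - p) + p * th) / (real (b + 1) * lam)"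
  shows "th ^ m + real m * (p * th ^ m + (1 - p) * th ^ (m - 1))
          + real (b - m) * (p * th ^ (m + 1) + (1 - p) * th ^ m)
         \<le> real (b + 1) * lam * nx ^ m"
proof -
  have lampos: "lam > 0"
  proof -
    have "real b * p / real (b + 1) * (1 - th) \<le> p * 1"
    proof (intro mult_mono)
      show "real b * p / real (b + 1) \<le> p" using p by (simp add: field_simps)
    qed (use p th in auto)
    then show ?thesis unfolding lam_def using p by linarith
  qed
  define d where "d = (1 - th) * ((1 - p) + p * th) / (real (b + 1) * lam)"
  have d0: "0 \<le> d" unfolding d_def using p th lampos by (intro divide_nonneg_pos) auto
  have nxd: "nx = th + d" unfolding nx_def d_def by simp
  have B: "th ^ m + real m * th ^ (m - 1) * d \<le> nx ^ m"
    unfolding nxd by (rule bernoulli_pow[OF th(1) d0])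
  have bl: "real (b + 1) * lam = 1 + real b * (1 - p) + real b * p * th"
    unfolding lam_def by (simp add: field_simps)
  have dd: "real (b + 1) * lam * d = (1 - th) * ((1 - p) + p * th)"
    unfolding d_def using lampos by simp
  have rhs: "real (b + 1) * lam * (th ^ m + real m * th ^ (m - 1) * d) =
      (1 + real b * (1 - p) + real b * p * th) * th ^ m + real m * th ^ (m - 1) * ((1 - th) * ((1 - p) + p * th))"
  proof -
    have "real (b + 1) * lam * (th ^ m + real m * th ^ (m - 1) * d) =
      (real (b + 1) * lam) * th ^ m + real m * th ^ (m - 1) * (real (b + 1) * lam * d)"
      by (simp add: algebra_simps)
    then show ?thesis unfolding dd unfolding bl .
  qed
  have bm: "real (b - m) = real b - real m" using m by simp
  have key: "th ^ m + real m * (p * th ^ m + (1 - p) * th ^ (m - 1))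
          + real (b - m) * (p * th ^ (m + 1) + (1 - p) * th ^ m)
        \<le> (1 + real b * (1 - p) + real b * p * th) * th ^ m + real m * th ^ (m - 1) * ((1 - th) * ((1 - p) + p * th))"
  proof (cases m)
    case 0 then show ?thesis by (simp add: algebra_simps)
  next
    case (Suc n)
    have e1: "th ^ m = th * th ^ n" "th ^ (m - 1) = th ^ n" "th ^ (m + 1) = th * th * th ^ n"
      using Suc by auto
    show ?thesis unfolding e1 bm by (simp add: algebra_simps)
  qed
  have "real (b + 1) * lam * (th ^ m + real m * th ^ (m - 1) * d) \<le> real (b + 1) * lam * nx ^ m"
    using B lampos by (intro mult_left_mono) auto
  then show ?thesis using key rhs by linarith
qed


lemma nat_ceiling_bounds:
  fixes x :: real assumes "0 \<le> x"
  shows "x \<le> real (nat \<lceil>x\<rceil>)" "real (nat \<lceil>x\<rceil>) \<le> x + 1"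
proof -
  have "0 \<le> \<lceil>x\<rceil>" using assms by linarith
  then have e: "real (nat \<lceil>x\<rceil>) = of_int \<lceil>x\<rceil>" by simp
  show "x \<le> real (nat \<lceil>x\<rceil>)" unfolding e by simp
  show "real (nat \<lceil>x\<rceil>) \<le> x + 1" unfolding e using ceiling_correct[of x] by linarith
qed

lemma exp_pow_bound:
  fixes a :: real assumes "0 \<le> 1 - a"
  shows "(1 - a) ^ n \<le> exp (- (real n * a))"
proof -
  have "(1 - a) ^ n \<le> exp (- a) ^ n"
    using assms exp_ge_add_one_self[of "- a"] by (intro power_mono) auto
  also have "\<dots> = exp (- (real n * a))" using exp_of_nat_mult[of n "- a"] by simp
  finally show ?thesis .
qed

lemma numeric:
  fixes \<epsilon> :: real and b k L T :: nat
  assumes eps: "0 < \<epsilon>" and b3: "3 \<le> b" and k3: "3 \<le> k"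
    and kle: "real k \<le> real b / ((1 + \<epsilon>) * ln (real b))"
    and ppb: "1 / real (k - 1) \<le> (\<epsilon> / 4) / (1 + 3 * \<epsilon> / 4)"
    and Cdef: "C = ln (4 * (1 + \<epsilon>) / \<epsilon>)"
    and Ldef: "L = nat \<lceil>C * (real b + 1)\<rceil>"
    and Tdef: "T = nat \<lceil>8 * (real b + 1) * ln (real b)\<rceil>"
    and C8: "C \<le> 8 * ln (real b)"
  defines "pp \<equiv> 1 / real (k - 1)"
  shows "L \<le> T"
    "(real b / real (b + 1)) ^ (T - L) * real b
      + real (T - L) * (2 * real k * exp (real L / real (b + 1) - real b * pp * (1 - pp) *
           (1 - (1 - 1 / (real (b + 1) * (1 - pp))) ^ L))) / real (b + 1)
     \<le> exp (C + 1) * (1 / real b + 18 * exp (- (\<epsilon> / 2) * ln (real b)))"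
proof -
  define eta where "eta = \<epsilon> / (4 * (1 + \<epsilon>))"
  have eta0: "0 < eta" "eta < 1" unfolding eta_def using eps by (auto simp: field_simps)
  have Ceta: "exp (- C) = eta"
  proof -
    have a: "0 < 4 * (1 + \<epsilon>) / \<epsilon>" using eps by simp
    have "exp (- C) = inverse (exp C)" by (simp add: exp_minus)
    also have "exp C = 4 * (1 + \<epsilon>) / \<epsilon>" unfolding Cdef using a by simp
    finally show ?thesis unfolding eta_def by simp
  qed
  have C0: "0 < C" unfolding Cdef using eps by (simp add: field_simps)
  have lnb: "1 \<le> ln (real b)"
  proof -
    have "exp 1 \<le> real b" using exp_le b3 by linarith
    then show ?thesis using b3 by (simp add: ln_ge_iff)
  qed
  have bpos: "0 < real b" using b3 by simp
  let ?b1 = "real b + 1"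
  have b1pos: "0 < ?b1" by simp
  have rb1: "real (b + 1) = ?b1" by simp
  have L1: "C * ?b1 \<le> real L" and L2: "real L \<le> C * ?b1 + 1"
    unfolding Ldef using nat_ceiling_bounds[of "C * ?b1"] C0 by auto
  have T1: "8 * ?b1 * ln (real b) \<le> real T" and T2: "real T \<le> 8 * ?b1 * ln (real b) + 1"
    unfolding Tdef using nat_ceiling_bounds[of "8 * ?b1 * ln (real b)"] lnb by auto
  have "C * ?b1 \<le> (8 * ln (real b)) * ?b1" using C8 b1pos by (intro mult_right_mono) auto
  then have CT: "C * ?b1 \<le> 8 * ?b1 * ln (real b)" by (simp add: algebra_simps)
  show LT: "L \<le> T" unfolding Ldef Tdef
    by (intro nat_mono ceiling_mono CT)
  have TLr: "real (T - L) = real T - real L" using LT by simp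
  have rho_le: "real b / real (b + 1) = 1 - 1 / ?b1" by (simp add: field_simps)
  have t1a: "(real b / real (b + 1)) ^ (T - L) \<le> exp (- (real (T - L) * (1 / ?b1)))"
    unfolding rho_le by (rule exp_pow_bound) simp
  have "real (T - L) * (1 / ?b1) \<ge> 8 * ln (real b) - C - 1"
  proof -
    have "real T - real L \<ge> 8 * ?b1 * ln (real b) - C * ?b1 - 1" using T1 L2 by linarith
    then have "(real T - real L) / ?b1 \<ge> (8 * ?b1 * ln (real b) - C * ?b1 - 1) / ?b1"
      using b1pos by (intro divide_right_mono) auto
    moreover have "(8 * ?b1 * ln (real b) - C * ?b1 - 1) / ?b1 = 8 * ln (real b) - C - 1 / ?b1"
      using b1pos by (simp add: field_simps)
    moreover have "1 / ?b1 \<le> 1" using b1pos by simp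
    moreover have "real (T - L) * (1 / ?b1) = (real T - real L) / ?b1" unfolding TLr by simp
    ultimately show ?thesis by linarith
  qed
  then have "(real b / real (b + 1)) ^ (T - L) \<le> exp (C + 1 - 8 * ln (real b))"
    using t1a by (smt (verit) exp_mono)
  also have "\<dots> = exp (C + 1) * exp (- 8 * ln (real b))" by (simp add: exp_add[symmetric])
  also have "exp (- 8 * ln (real b)) \<le> exp (- 2 * ln (real b))" using lnb by simp
  also have "exp (- 2 * ln (real b)) = 1 / (real b * real b)"
  proof -
    have "exp (- 2 * ln (real b)) = inverse (exp (ln (real b)) ^ 2)"
      by (metis exp_minus exp_of_nat_mult mult_minus_left of_nat_numeral)
    then show ?thesis using bpos by (simp add: power2_eq_square divide_inverse)
  qed
  finally have t1b: "(real b / real (b + 1)) ^ (T - L) \<le> exp (C + 1) * (1 / (real b * real b))"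
    by simp
  have term1: "(real b / real (b + 1)) ^ (T - L) * real b \<le> exp (C + 1) * (1 / real b)"
  proof -
    have "(real b / real (b + 1)) ^ (T - L) * real b \<le> exp (C + 1) * (1 / (real b * real b)) * real b"
      using t1b bpos by (intro mult_right_mono) auto
    also have "\<dots> = exp (C + 1) * (1 / real b)" using bpos by (simp add: field_simps)
    finally show ?thesis .
  qed
  have k0: "0 < real k" using k3 by simp
  have pp0: "0 < pp" "pp \<le> 1/2" unfolding pp_def using k3 by (auto simp: field_simps)
  define g where "g = 1 / (real (b + 1) * (1 - pp))"
  have g_ge: "1 / ?b1 \<le> g"
  proof -
    have "real (b + 1) * (1 - pp) \<le> real (b + 1) * 1" using pp0 by (intro mult_left_mono) auto
    then have "real (b + 1) * (1 - pp) \<le> ?b1" unfolding rb1 by simp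
    moreover have "0 < real (b + 1) * (1 - pp)" using pp0 by simp
    ultimately show ?thesis unfolding g_def by (simp add: frac_le)
  qed
  have g1: "g \<le> 1"
  proof -
    have "2 * (1/2) \<le> real (b + 1) * (1 - pp)" by (rule mult_mono) (use b3 pp0 in auto)
    then show ?thesis unfolding g_def by simp
  qed
  have powg: "(1 - g) ^ L \<le> eta"
  proof -
    have "(1 - g) ^ L \<le> exp (- (real L * g))" by (rule exp_pow_bound) (use g1 in simp)
    also have "\<dots> \<le> exp (- C)"
    proof -
      have "real L * (1 / ?b1) \<le> real L * g" using g_ge by (intro mult_left_mono) auto
      moreover have "C \<le> real L * (1 / ?b1)" using L1 b1pos by (simp add: field_simps)
      ultimately show ?thesis by simp
    qed
    finally show ?thesis using Ceta by simp
  qed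
  have bpp: "(1 + \<epsilon>) * ln (real b) \<le> real b * pp"
  proof -
    have kl: "real k * ((1 + \<epsilon>) * ln (real b)) \<le> real b"
      using kle eps lnb by (simp add: le_divide_eq)
    have "real b / real k \<le> real b / real (k - 1)"
      using k3 bpos by (intro divide_left_mono) auto
    then have "real b * pp \<ge> real b / real k" unfolding pp_def by simp
    moreover have "(1 + \<epsilon>) * ln (real b) \<le> real b / real k" using kl k0 by (simp add: field_simps)
    ultimately show ?thesis by linarith
  qed
  have expo: "real L / real (b + 1) - real b * pp * (1 - pp) * (1 - (1 - g) ^ L)
      \<le> C + 1 - (1 + \<epsilon> / 2) * ln (real b)"
  proof -
    have "real L / real (b + 1) \<le> C + 1"
    proof -
      have "real L / ?b1 \<le> (C * ?b1 + 1) / ?b1" using L2 b1pos by (intro divide_right_mono) auto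
      also have "\<dots> = C + 1 / ?b1" using b1pos by (simp add: field_simps)
      also have "\<dots> \<le> C + 1" using b1pos by simp
      finally show ?thesis unfolding rb1 .
    qed
    moreover have "(1 + \<epsilon> / 2) * ln (real b) \<le> real b * pp * (1 - pp) * (1 - (1 - g) ^ L)"
    proof -
      have e1: "(1 + \<epsilon>) * (1 - eta) = 1 + 3 * \<epsilon> / 4" unfolding eta_def using eps by (simp add: field_simps)
      have c0: "0 < 1 + 3 * \<epsilon> / 4" using eps by simp
      have h: "pp * (1 + 3 * \<epsilon> / 4) \<le> \<epsilon> / 4"
        using ppb pos_le_divide_eq[OF c0] unfolding pp_def by blast
      have "(1 - pp) * (1 + 3 * \<epsilon> / 4) = (1 + 3 * \<epsilon> / 4) - pp * (1 + 3 * \<epsilon> / 4)"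
        by (simp only: left_diff_distrib mult_1)
      then have e2: "1 + \<epsilon> / 2 \<le> (1 - pp) * (1 + 3 * \<epsilon> / 4)" using h by linarith
      have "(1 + \<epsilon> / 2) * ln (real b) \<le> (1 - pp) * (1 + 3 * \<epsilon> / 4) * ln (real b)"
        using e2 lnb by (intro mult_right_mono) auto
      also have "\<dots> = (1 - pp) * ((1 + \<epsilon>) * (1 - eta)) * ln (real b)"
        unfolding e1 ..
      also have "\<dots> = ((1 + \<epsilon>) * ln (real b)) * (1 - pp) * (1 - eta)"
        by (simp only: mult_ac)
      also have "\<dots> \<le> (real b * pp) * (1 - pp) * (1 - (1 - g) ^ L)"
      proof -
        have m1: "((1 + \<epsilon>) * ln (real b)) * (1 - pp) \<le> (real b * pp) * (1 - pp)"
          by (rule mult_right_mono[OF bpp]) (use pp0 in simp)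
        show ?thesis
          by (rule mult_mono[OF m1]) (use powg pp0 eta0 bpos in auto)
      qed
      finally show ?thesis by simp
    qed
    ultimately show ?thesis by linarith
  qed
  have WT: "real (T - L) / real (b + 1) \<le> 9 * ln (real b)"
  proof -
    have "real (T - L) \<le> real T" by simp
    then have "real (T - L) / ?b1 \<le> (8 * ?b1 * ln (real b) + 1) / ?b1"
      using T2 b1pos by (intro divide_right_mono) auto
    also have "\<dots> = 8 * ln (real b) + 1 / ?b1" using b1pos by (simp add: field_simps)
    also have "\<dots> \<le> 9 * ln (real b)"
    proof -
      have "1 / ?b1 \<le> 1" using b1pos by simp
      then show ?thesis using lnb by linarith
    qed
    finally show ?thesis unfolding rb1 .
  qed
  have klnb: "real k * ln (real b) \<le> real b"
  proof -
    have "real k * ((1 + \<epsilon>) * ln (real b)) \<le> real b"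
      using kle eps lnb by (simp add: le_divide_eq)
    moreover have "real k * ln (real b) \<le> real k * ((1 + \<epsilon>) * ln (real b))"
      using eps lnb k0 by (intro mult_left_mono) auto
    ultimately show ?thesis by linarith
  qed
  define X where "X = real L / real (b + 1) - real b * pp * (1 - pp) * (1 - (1 - g) ^ L)"
  have term2: "real (T - L) * (2 * real k * exp X) / real (b + 1)
      \<le> exp (C + 1) * (18 * exp (- (\<epsilon> / 2) * ln (real b)))"
  proof -
    have "real (T - L) * (2 * real k * exp X) / real (b + 1) = (real (T - L) / real (b + 1)) * (2 * real k * exp X)"
      by simp
    also have "\<dots> \<le> (9 * ln (real b)) * (2 * real k * exp (C + 1 - (1 + \<epsilon> / 2) * ln (real b)))"
      using WT expo k0 lnb unfolding X_def by (intro mult_mono) auto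
    also have "exp (C + 1 - (1 + \<epsilon> / 2) * ln (real b)) =
        exp (C + 1) * exp (- (\<epsilon> / 2) * ln (real b)) / real b"
    proof -
      have "C + 1 - (1 + \<epsilon> / 2) * ln (real b) = (C + 1) + (- (\<epsilon> / 2) * ln (real b)) - ln (real b)"
        by (simp add: algebra_simps)
      then have "exp (C + 1 - (1 + \<epsilon> / 2) * ln (real b)) =
          exp (C + 1) * exp (- (\<epsilon> / 2) * ln (real b)) / exp (ln (real b))"
        by (simp only: exp_diff exp_add)
      then show ?thesis using bpos by simp
    qed
    also have "(9 * ln (real b)) * (2 * real k * (exp (C + 1) * exp (- (\<epsilon> / 2) * ln (real b)) / real b))
        = 18 * (real k * ln (real b)) / real b * (exp (C + 1) * exp (- (\<epsilon> / 2) * ln (real b)))"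
      by (simp add: field_simps)
    also have "\<dots> \<le> 18 * 1 * (exp (C + 1) * exp (- (\<epsilon> / 2) * ln (real b)))"
    proof -
      have "(real k * ln (real b)) / real b \<le> 1" using klnb bpos by simp
      then show ?thesis by (intro mult_right_mono) auto
    qed
    finally show ?thesis by (simp add: algebra_simps)
  qed
  show "(real b / real (b + 1)) ^ (T - L) * real b
      + real (T - L) * (2 * real k * exp (real L / real (b + 1) - real b * pp * (1 - pp) *
           (1 - (1 - 1 / (real (b + 1) * (1 - pp))) ^ L))) / real (b + 1)
     \<le> exp (C + 1) * (1 / real b + 18 * exp (- (\<epsilon> / 2) * ln (real b)))"
    using term1 term2 unfolding X_def g_def by (simp add: distrib_left)
qed

locale star =
  fixes b k :: nat and Q :: "(nat \<Rightarrow> nat) \<Rightarrow> (nat \<Rightarrow> nat) \<Rightarrow> nat \<Rightarrow> (nat \<times> nat) pmf"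
  assumes b1: "1 \<le> b" and k3: "3 \<le> k" and mc: "maximal_coupling_choice b k Q"
begin

abbreviation "V \<equiv> star_vertices b"
abbreviation "prop \<equiv> proper_coloring b k"
abbreviation "av \<equiv> avail b k"

lemma avail_root: "av x 0 = {d. d < k \<and> (\<forall>i\<in>{1..b}. d \<noteq> x i)}"
  unfolding avail_def star_vertices_def star_adj_def by auto

lemma avail_leaf: "i \<in> {1..b} \<Longrightarrow> av x i = {0..<k} - {x 0}"
  unfolding avail_def star_vertices_def star_adj_def by auto

lemma prop_root: "prop x \<Longrightarrow> x 0 < k"
  unfolding proper_coloring_def star_vertices_def by auto

lemma prop_leaf: "prop x \<Longrightarrow> i \<in> {1..b} \<Longrightarrow> x i \<noteq> x 0"
  unfolding proper_coloring_def star_vertices_def star_adj_def by force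

lemma prop_root_avail: "prop x \<Longrightarrow> x 0 \<in> av x 0"
proof -
  assume p: "prop x"
  have "\<forall>i\<in>{1..b}. x 0 \<noteq> x i" using prop_leaf[OF p] by metis
  then show ?thesis using prop_root[OF p] by (simp add: avail_root)
qed

lemma avail_fin: "finite (av x v)"
  unfolding avail_def by auto

lemma avail_ne: "prop x \<Longrightarrow> v \<in> V \<Longrightarrow> av x v \<noteq> {}"
proof -
  assume p: "prop x" and v: "v \<in> V"
  show ?thesis
  proof (cases "v = 0")
    case True then show ?thesis using prop_root_avail[OF p] by auto
  next
    case False
    then have "v \<in> {1..b}" using v by (auto simp: star_vertices_def)
    moreover have "(if x 0 = 0 then 1 else 0) \<in> {0..<k} - {x 0}" using k3 by auto
    ultimately show ?thesis by (auto simp: avail_leaf)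
  qed
qed

lemma card_avail_leaf: "prop x \<Longrightarrow> i \<in> {1..b} \<Longrightarrow> card (av x i) = k - 1"
  using prop_root[of x] by (simp add: avail_leaf)

lemma proper_upd:
  assumes "prop x" "v \<in> V" "c \<in> av x v"
  shows "prop (x(v := c))"
proof -
  have c: "c < k" using assms(3) unfolding avail_def by auto
  have lt: "\<forall>w\<in>V. (x(v := c)) w < k"
    using assms(1) c unfolding proper_coloring_def by auto
  have ne: "\<forall>i\<in>{1..b}. (x(v := c)) 0 \<noteq> (x(v := c)) i"
  proof
    fix i assume i: "i \<in> {1..b}"
    show "(x(v := c)) 0 \<noteq> (x(v := c)) i"
    proof (cases "v = 0")
      case True
      then show ?thesis using assms(3) i by (auto simp: avail_root)
    next
      case False
      then have vl: "v \<in> {1..b}" using assms(2) by (auto simp: star_vertices_def)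
      show ?thesis
      proof (cases "i = v")
        case True then show ?thesis using False assms(3) vl by (auto simp: avail_leaf)
      next
        case False then show ?thesis using \<open>v \<noteq> 0\<close> i prop_leaf[OF assms(1) i] by auto
      qed
    qed
  qed
  show ?thesis unfolding proper_coloring_def
  proof (intro conjI lt ballI impI)
    fix u w assume "u \<in> V" "w \<in> V" "star_adj b u w"
    then have "(u = 0 \<and> w \<in> {1..b}) \<or> (w = 0 \<and> u \<in> {1..b})" by (simp add: star_adj_def)
    then show "(x(v := c)) u \<noteq> (x(v := c)) w" using ne by metis
  qed
qed

lemma Q_supp:
  assumes "prop x" "prop y" "v \<in> V" "(c, d) \<in> set_pmf (Q x y v)"
  shows "c \<in> av x v \<and> d \<in> av y v"
proof -
  have m: "maximal_color_coupling b k x y v (Q x y v)"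
    using mc assms unfolding maximal_coupling_choice_def by auto
  have "c \<in> set_pmf (map_pmf fst (Q x y v))" using assms(4) by force
  then have c: "c \<in> av x v" using m avail_ne[OF assms(1,3)] avail_fin
    unfolding maximal_color_coupling_def by auto
  have "d \<in> set_pmf (map_pmf snd (Q x y v))" using assms(4) by force
  then have d: "d \<in> av y v" using m avail_ne[OF assms(2,3)] avail_fin
    unfolding maximal_color_coupling_def by auto
  show ?thesis using c d by auto
qed

lemma step_supp:
  assumes "prop x" "prop y" "s \<in> set_pmf (coupled_step b Q (x, y))"
  shows "prop (fst s) \<and> prop (snd s)"
proof -
  have fin: "finite V" and ne: "V \<noteq> {}" by (auto simp: star_vertices_def)
  have "s \<in> set_pmf (pmf_of_set V \<bind> (\<lambda>v. map_pmf (\<lambda>(c, d). (x(v := c), y(v := d))) (Q x y v)))"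
    using assms(3) by (simp add: coupled_step_def)
  then obtain v where v: "v \<in> V" and
    sv: "s \<in> set_pmf (map_pmf (\<lambda>(c, d). (x(v := c), y(v := d))) (Q x y v))"
    using fin ne by (auto simp del: set_map_pmf)
  then obtain c d where cd: "(c,d) \<in> set_pmf (Q x y v)" and s: "s = (x(v:=c), y(v:=d))"
    by auto
  show ?thesis using Q_supp[OF assms(1,2) v cd] proper_upd assms v s by auto
qed

lemma dist_supp:
  assumes "prop x0" "prop y0" "s \<in> set_pmf (coupled_dist b Q x0 y0 t)"
  shows "prop (fst s) \<and> prop (snd s)"
  using assms(3)
proof (induction t arbitrary: s)
  case 0 then show ?case using assms by auto
next
  case (Suc t)
  then obtain s0 where s0: "s0 \<in> set_pmf (coupled_dist b Q x0 y0 t)"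
    and s: "s \<in> set_pmf (coupled_step b Q s0)"
    unfolding coupled_dist.simps set_bind_pmf by blast
  obtain x y where "s0 = (x,y)" by force
  then show ?case using Suc.IH[OF s0] step_supp[of x y s] s by simp
qed

definition sstep :: "(nat \<Rightarrow> nat) \<Rightarrow> (nat \<Rightarrow> nat) pmf" where
  "sstep x = pmf_of_set V \<bind> (\<lambda>v. map_pmf (\<lambda>c. x(v := c)) (pmf_of_set (av x v)))"

lemma marg_fst:
  assumes "prop x" "prop y"
  shows "map_pmf fst (coupled_step b Q (x, y)) = sstep x"
proof -
  have "map_pmf fst (coupled_step b Q (x, y)) = pmf_of_set V \<bind>
     (\<lambda>v. map_pmf fst (map_pmf (\<lambda>(c, d). (x(v := c), y(v := d))) (Q x y v)))"
    by (simp add: coupled_step_def map_bind_pmf)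
  also have "\<dots> = sstep x" unfolding sstep_def
  proof (rule bind_pmf_cong)
    fix v assume "v \<in> set_pmf (pmf_of_set V)"
    then have v: "v \<in> V" by (auto simp: star_vertices_def)
    have m: "maximal_color_coupling b k x y v (Q x y v)"
      using mc assms v unfolding maximal_coupling_choice_def by auto
    have "map_pmf fst (map_pmf (\<lambda>(c, d). (x(v := c), y(v := d))) (Q x y v))
        = map_pmf (\<lambda>c. x(v := c)) (map_pmf fst (Q x y v))"
      by (simp add: pmf.map_comp o_def case_prod_beta)
    also have "\<dots> = map_pmf (\<lambda>c. x(v := c)) (pmf_of_set (av x v))"
      using m unfolding maximal_color_coupling_def by simp
    finally show "map_pmf fst (map_pmf (\<lambda>(c, d). (x(v := c), y(v := d))) (Q x y v))
        = map_pmf (\<lambda>c. x(v := c)) (pmf_of_set (av x v))" .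
  qed simp
  finally show ?thesis .
qed

lemma marg_snd:
  assumes "prop x" "prop y"
  shows "map_pmf snd (coupled_step b Q (x, y)) = sstep y"
proof -
  have "map_pmf snd (coupled_step b Q (x, y)) = pmf_of_set V \<bind>
     (\<lambda>v. map_pmf snd (map_pmf (\<lambda>(c, d). (x(v := c), y(v := d))) (Q x y v)))"
    by (simp add: coupled_step_def map_bind_pmf)
  also have "\<dots> = sstep y" unfolding sstep_def
  proof (rule bind_pmf_cong)
    fix v assume "v \<in> set_pmf (pmf_of_set V)"
    then have v: "v \<in> V" by (auto simp: star_vertices_def)
    have m: "maximal_color_coupling b k x y v (Q x y v)"
      using mc assms v unfolding maximal_coupling_choice_def by auto
    have "map_pmf snd (map_pmf (\<lambda>(c, d). (x(v := c), y(v := d))) (Q x y v))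
        = map_pmf (\<lambda>c. y(v := c)) (map_pmf snd (Q x y v))"
      by (simp add: pmf.map_comp o_def case_prod_beta)
    also have "\<dots> = map_pmf (\<lambda>c. y(v := c)) (pmf_of_set (av y v))"
      using m unfolding maximal_color_coupling_def by simp
    finally show "map_pmf snd (map_pmf (\<lambda>(c, d). (x(v := c), y(v := d))) (Q x y v))
        = map_pmf (\<lambda>c. y(v := c)) (pmf_of_set (av y v))" .
  qed simp
  finally show ?thesis .
qed

lemma leaf_good:
  assumes px: "prop x" and py: "prop y" and v: "v \<in> {1..b}" and cd: "(c, d) \<in> set_pmf (Q x y v)"
  shows "c = d \<or> (c = y 0 \<and> d = x 0)"
proof -
  define q where "q = Q x y v"
  have vV: "v \<in> V" using v by (auto simp: star_vertices_def)
  have m: "maximal_color_coupling b k x y v q"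
    using mc px py vV unfolding maximal_coupling_choice_def q_def by auto
  have cA: "card (av x v) = k - 1" "card (av y v) = k - 1"
    using card_avail_leaf px py v by auto
  have mf: "map_pmf fst q = pmf_of_set (av x v)" and ms: "map_pmf snd q = pmf_of_set (av y v)"
    and dg: "\<And>c'. c' \<in> av x v \<inter> av y v \<Longrightarrow> pmf q (c', c') = 1 / real (k - 1)"
    using m cA unfolding maximal_color_coupling_def by auto
  have neA: "av x v \<noteq> {}" "av y v \<noteq> {}" using avail_ne px py vV by auto
  have z1: "pmf q (c', d') = 0" if c': "c' \<in> av x v \<inter> av y v" and ne: "d' \<noteq> c'" for c' d'
  proof -
    have "pmf (map_pmf fst q) c' = 1 / real (k - 1)"
      using c' cA by (simp add: mf pmf_of_set avail_fin neA)
    moreover have "pmf (map_pmf fst q) c' = measure q (fst -` {c'})" by (rule pmf_map)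
    moreover have "measure q {(c', c'), (c', d')} \<le> measure q (fst -` {c'})"
      by (rule measure_pmf.finite_measure_mono) auto
    moreover have "measure q {(c', c'), (c', d')} = pmf q (c', c') + pmf q (c', d')"
      using ne by (simp add: measure_measure_pmf_finite)
    ultimately have "pmf q (c', d') \<le> 0" using dg[OF c'] by simp
    then show ?thesis using pmf_nonneg[of q "(c',d')"] by linarith
  qed
  have z2: "pmf q (d', c') = 0" if c': "c' \<in> av x v \<inter> av y v" and ne: "d' \<noteq> c'" for c' d'
  proof -
    have "pmf (map_pmf snd q) c' = 1 / real (k - 1)"
      using c' cA by (simp add: ms pmf_of_set avail_fin neA)
    moreover have "pmf (map_pmf snd q) c' = measure q (snd -` {c'})" by (rule pmf_map)
    moreover have "measure q {(c', c'), (d', c')} \<le> measure q (snd -` {c'})"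
      by (rule measure_pmf.finite_measure_mono) auto
    moreover have "measure q {(c', c'), (d', c')} = pmf q (c', c') + pmf q (d', c')"
      using ne by (simp add: measure_measure_pmf_finite)
    ultimately have "pmf q (d', c') \<le> 0" using dg[OF c'] by simp
    then show ?thesis using pmf_nonneg[of q "(d',c')"] by linarith
  qed
  have pos: "pmf q (c, d) \<noteq> 0" using cd by (simp add: q_def set_pmf_iff)
  have cdin: "c \<in> av x v" "d \<in> av y v" using Q_supp[OF px py vV cd] by auto
  show ?thesis
  proof (cases "c \<in> av y v")
    case True
    then have "c = d" using z1[of c d] pos cdin by auto
    then show ?thesis by simp
  next
    case False
    then have c0: "c = y 0" using cdin v by (auto simp: avail_leaf)
    have "d \<notin> av x v"
    proof
      assume "d \<in> av x v"
      then have "pmf q (c, d) = 0" using z2[of d c] cdin False by auto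
      then show False using pos by simp
    qed
    then have "d = x 0" using cdin v by (auto simp: avail_leaf)
    then show ?thesis using c0 by simp
  qed
qed

definition free :: "(nat \<Rightarrow> nat) \<Rightarrow> bool" where
  "free x \<longleftrightarrow> (\<exists>d<k. d \<noteq> x 0 \<and> (\<forall>i\<in>{1..b}. x i \<noteq> d))"

lemma nofree_avail: "prop x \<Longrightarrow> \<not> free x \<Longrightarrow> av x 0 = {x 0}"
  using prop_root_avail[of x] unfolding free_def avail_root by auto

lemma root_nomove:
  assumes px: "prop x" and py: "prop y" and cd: "(c, d) \<in> set_pmf (Q x y 0)"
  shows "(\<not> free x \<longrightarrow> c = x 0) \<and> (\<not> free y \<longrightarrow> d = y 0)"
  using Q_supp[OF px py _ cd] nofree_avail[OF px] nofree_avail[OF py]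
  by (auto simp: star_vertices_def)

definition badset :: "(nat \<Rightarrow> nat) \<Rightarrow> (nat \<Rightarrow> nat) \<Rightarrow> nat set" where
  "badset x y = {i\<in>{1..b}. \<not> (x i = y i \<or> (x i = y 0 \<and> y i = x 0))}"

definition nbad :: "(nat \<Rightarrow> nat) \<times> (nat \<Rightarrow> nat) \<Rightarrow> real" where
  "nbad s = real (card (badset (fst s) (snd s)))"

lemma badset_fin: "finite (badset x y)" unfolding badset_def by auto

lemma nbad_ge0: "0 \<le> nbad s" unfolding nbad_def by simp

lemma nbad_le: "nbad s \<le> b"
proof -
  have "card (badset (fst s) (snd s)) \<le> card {1..b}"
    by (rule card_mono) (auto simp: badset_def)
  then show ?thesis by (simp add: nbad_def)
qed

lemma min1_bnd: "0 \<le> a \<Longrightarrow> \<bar>min 1 (a * nbad s)\<bar> \<le> 1"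
proof -
  assume a: "0 \<le> a"
  have h: "0 \<le> a * nbad s" using a nbad_ge0[of s] by simp
  then show ?thesis by (auto simp: min_def)
qed

lemma expect_step:
  fixes F :: "(nat \<Rightarrow> nat) \<times> (nat \<Rightarrow> nat) \<Rightarrow> real"
  assumes "\<And>s. \<bar>F s\<bar> \<le> B"
  shows "measure_pmf.expectation (coupled_step b Q (x, y)) F =
    (\<Sum>v\<in>V. measure_pmf.expectation (Q x y v) (\<lambda>(c, d). F (x(v := c), y(v := d)))) / real (b + 1)"
proof -
  have eq: "coupled_step b Q (x, y) = pmf_of_set V \<bind> (\<lambda>v. map_pmf (\<lambda>(c, d). (x(v := c), y(v := d))) (Q x y v))"
    by (simp add: coupled_step_def)
  have "measure_pmf.expectation (coupled_step b Q (x, y)) F =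
     measure_pmf.expectation (pmf_of_set V) (\<lambda>v. measure_pmf.expectation
        (map_pmf (\<lambda>(c, d). (x(v := c), y(v := d))) (Q x y v)) F)"
    unfolding eq by (rule expectation_bind_pmf[OF assms])
  also have "\<dots> = (\<Sum>v\<in>V. measure_pmf.expectation
        (map_pmf (\<lambda>(c, d). (x(v := c), y(v := d))) (Q x y v)) F) / real (card V)"
    by (rule integral_pmf_of_set) (auto simp: star_vertices_def)
  also have "\<dots> = (\<Sum>v\<in>V. measure_pmf.expectation (Q x y v) (\<lambda>(c, d). F (x(v := c), y(v := d)))) / real (b + 1)"
    by (simp add: star_vertices_def case_prod_unfold)
  finally show ?thesis .
qed

lemma B_step:
  assumes px: "prop x" and py: "prop y" and a: "0 \<le> a"
  shows "measure_pmf.expectation (coupled_step b Q (x, y)) (\<lambda>s. min 1 (a * nbad s))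
     \<le> min 1 (a * (real b / real (b + 1)) * nbad (x, y)) + of_bool (free x \<or> free y) / real (b + 1)"
proof -
  let ?F = "\<lambda>s. min 1 (a * nbad s)"
  let ?N = "nbad (x, y)"
  let ?E = "\<lambda>v. measure_pmf.expectation (Q x y v) (\<lambda>(c, d). ?F (x(v := c), y(v := d)))"
  let ?ind = "\<lambda>i. of_bool (i \<in> badset x y) :: real"
  have bnd: "\<And>s. \<bar>?F s\<bar> \<le> 1" by (rule min1_bnd[OF a])
  have Eleaf: "?E v \<le> min 1 (a * (?N - ?ind v))" if v: "v \<in> {1..b}" for v
  proof (rule expectation_le_const_supp[where B=1])
    fix cd assume cd: "cd \<in> set_pmf (Q x y v)"
    obtain c d where cdp: "cd = (c, d)" by (cases cd)
    have g: "c = d \<or> (c = y 0 \<and> d = x 0)" using leaf_good[OF px py v] cd cdp by simp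
    have v0: "v \<noteq> 0" using v by simp
    have sub: "badset (x(v := c)) (y(v := d)) \<subseteq> badset x y - {v}"
    proof
      fix i assume i: "i \<in> badset (x(v := c)) (y(v := d))"
      then have i1: "i \<in> {1..b}" and nb: "\<not> ((x(v := c)) i = (y(v := d)) i \<or>
          ((x(v := c)) i = (y(v := d)) 0 \<and> (y(v := d)) i = (x(v := c)) 0))"
        unfolding badset_def by auto
      have iv: "i \<noteq> v" using nb g v0 by auto
      then have "\<not> (x i = y i \<or> (x i = y 0 \<and> y i = x 0))" using nb v0 by simp
      then show "i \<in> badset x y - {v}" using i1 iv unfolding badset_def by simp
    qed
    have c1: "card (badset (x(v := c)) (y(v := d))) \<le> card (badset x y - {v})"
      by (rule card_mono[OF _ sub]) (simp add: badset_fin)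
    have c2: "real (card (badset x y - {v})) = ?N - ?ind v"
    proof (cases "v \<in> badset x y")
      case True
      then have "card (badset x y) \<noteq> 0" using badset_fin[of x y] by (auto simp add: card_eq_0_iff)
      then have "card (badset x y) \<ge> 1" by simp
      then show ?thesis using True by (simp add: nbad_def badset_fin of_nat_diff)
    next
      case False
      then show ?thesis by (simp add: nbad_def)
    qed
    have "nbad (x(v := c), y(v := d)) \<le> ?N - ?ind v"
      using c1 c2 unfolding nbad_def fst_conv snd_conv by linarith
    then have "a * nbad (x(v := c), y(v := d)) \<le> a * (?N - ?ind v)"
      by (rule mult_left_mono[OF _ a])
    then show "(\<lambda>(c, d). ?F (x(v := c), y(v := d))) cd \<le> min 1 (a * (?N - ?ind v))"
      using cdp by (simp add: min.coboundedI2)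
  next
    fix cd show "\<bar>(\<lambda>(c, d). ?F (x(v := c), y(v := d))) cd\<bar> \<le> 1"
      using bnd by (simp add: case_prod_beta)
  qed
  have Eroot: "?E 0 \<le> min 1 (a * ?N) + of_bool (free x \<or> free y)"
  proof (cases "free x \<or> free y")
    case True
    have "?E 0 \<le> 1"
      by (rule expectation_le_const_supp[where B=1]) (use bnd in \<open>auto simp: case_prod_beta\<close>)
    moreover have "0 \<le> min 1 (a * ?N)" using nbad_ge0[of "(x,y)"] a by simp
    ultimately show ?thesis using True by simp
  next
    case False
    have "?E 0 \<le> min 1 (a * ?N)"
    proof (rule expectation_le_const_supp[where B=1])
      fix cd assume cd: "cd \<in> set_pmf (Q x y 0)"
      obtain c d where cdp: "cd = (c, d)" by force
      have "c = x 0" "d = y 0" using root_nomove[OF px py] cd cdp False by auto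
      then show "(\<lambda>(c, d). ?F (x(0 := c), y(0 := d))) cd \<le> min 1 (a * ?N)"
        using cdp by simp
    qed (use bnd in \<open>auto simp: case_prod_beta\<close>)
    then show ?thesis using False by simp
  qed
  have Vsplit: "V = insert 0 {1..b}" by (auto simp: star_vertices_def)
  have sumE: "(\<Sum>v\<in>V. ?E v) = ?E 0 + (\<Sum>v\<in>{1..b}. ?E v)"
    unfolding Vsplit by (subst sum.insert) auto
  have S1: "(\<Sum>v\<in>{1..b}. ?E v) \<le> (\<Sum>v\<in>{1..b}. min 1 (a * (?N - ?ind v)))"
    by (rule sum_mono) (rule Eleaf)
  let ?S = "min 1 (a * ?N) + (\<Sum>v\<in>{1..b}. min 1 (a * (?N - ?ind v)))"
  have S2a: "?S \<le> real b + 1"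
  proof -
    have "(\<Sum>v\<in>{1..b}. min 1 (a * (?N - ?ind v))) \<le> (\<Sum>v\<in>{1..b}. 1)"
      by (rule sum_mono) simp
    then show ?thesis by simp
  qed
  have indsum: "(\<Sum>v\<in>{1..b}. ?ind v) = ?N"
  proof -
    have "(\<Sum>v\<in>{1..b}. ?ind v) = real (card ({1..b} \<inter> {v. v \<in> badset x y}))"
      by simp
    also have "{1..b} \<inter> {v. v \<in> badset x y} = badset x y" by (auto simp: badset_def)
    finally show ?thesis by (simp add: nbad_def)
  qed
  have S2b: "?S \<le> a * real b * ?N"
  proof -
    have "(\<Sum>v\<in>{1..b}. min 1 (a * (?N - ?ind v))) \<le> (\<Sum>v\<in>{1..b}. a * (?N - ?ind v))"
      by (rule sum_mono) simp
    also have "\<dots> = a * (real b * ?N - ?N)"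
      using indsum by (simp add: sum_distrib_left[symmetric] sum_subtractf)
    finally show ?thesis by (simp add: algebra_simps)
  qed
  have "measure_pmf.expectation (coupled_step b Q (x, y)) ?F = (\<Sum>v\<in>V. ?E v) / real (b + 1)"
    by (rule expect_step[OF bnd])
  also have "\<dots> \<le> (?S + of_bool (free x \<or> free y)) / real (b + 1)"
    using sumE S1 Eroot by (intro divide_right_mono) auto
  also have "\<dots> = ?S / real (b + 1) + of_bool (free x \<or> free y) / real (b + 1)"
    by (simp add: add_divide_distrib)
  also have "?S / real (b + 1) \<le> min 1 (a * (real b / real (b + 1)) * ?N)"
  proof -
    have pb: "0 < real (b + 1)" by simp
    have 1: "?S / real (b + 1) \<le> 1" using S2a pb by (simp add: divide_le_eq)
    have "?S / real (b + 1) \<le> (a * real b * ?N) / real (b + 1)"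
      using S2b pb by (intro divide_right_mono) auto
    also have "\<dots> = a * (real b / real (b + 1)) * ?N" by simp
    finally show ?thesis using 1 by simp
  qed
  finally show ?thesis by - (simp only: add_right_mono)
qed

definition cnt :: "(nat \<Rightarrow> nat) \<Rightarrow> nat \<Rightarrow> nat" where
  "cnt x c = card {i\<in>{1..b}. x i = c}"

definition fpot :: "real \<Rightarrow> (nat \<Rightarrow> nat) \<Rightarrow> nat \<Rightarrow> real" where
  "fpot th x c = (if x 0 \<noteq> c then th ^ cnt x c else 0)"

definition pp :: real where "pp = 1 / real (k - 1)"

definition lamf :: "real \<Rightarrow> real" where
  "lamf th = 1 - real b * pp / real (b + 1) * (1 - th)"

definition nxt :: "real \<Rightarrow> real" where
  "nxt th = th + (1 - th) * ((1 - pp) + pp * th) / (real (b + 1) * lamf th)"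

lemma pp_pos: "0 < pp" and pp_half: "pp \<le> 1/2"
  using k3 by (auto simp: pp_def field_simps)

lemma cnt_le: "cnt x c \<le> b"
proof -
  have "cnt x c \<le> card {1..b}" unfolding cnt_def by (rule card_mono) auto
  then show ?thesis by simp
qed

lemma cnt_upd_root: "cnt (x(0 := c')) c = cnt x c"
  unfolding cnt_def by (rule arg_cong[where f=card]) auto

lemma cnt_upd_leaf:
  assumes v: "v \<in> {1..b}"
  shows "cnt (x(v := c')) c = (if c' = c then 1 else 0) + (cnt x c - (if x v = c then 1 else 0))"
proof -
  define S where "S = {i\<in>{1..b}. x i = c}"
  have fS: "finite (S - {v})" unfolding S_def by auto
  have e: "{i\<in>{1..b}. (x(v := c')) i = c} = (if c' = c then insert v (S - {v}) else S - {v})"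
    using v unfolding S_def by auto
  have cS: "card (S - {v}) = cnt x c - (if x v = c then 1 else 0)"
    using v unfolding cnt_def S_def by (simp add: card_Diff_singleton_if)
  have ci: "card (insert v (S - {v})) = card (S - {v}) + 1"
    using card_insert_disjoint[OF fS, of v] by simp
  have "card {i\<in>{1..b}. (x(v := c')) i = c} = (if c' = c then 1 else 0) + card (S - {v})"
  proof (cases "c' = c")
    case True
    then have e': "{i\<in>{1..b}. (x(v := c')) i = c} = insert v (S - {v})" using e by simp
    show ?thesis unfolding e' ci using True by simp
  next
    case False
    then have e': "{i\<in>{1..b}. (x(v := c')) i = c} = S - {v}" using e by simp
    show ?thesis unfolding e' using False by simp
  qed
  then show ?thesis unfolding cnt_def[of "x(v := c')"] cS .
qed

lemma fpot_nonneg: "0 \<le> th \<Longrightarrow> 0 \<le> fpot th x c"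
  unfolding fpot_def by simp

lemma fpot_le1: "0 \<le> th \<Longrightarrow> th \<le> 1 \<Longrightarrow> fpot th x c \<le> 1"
  unfolding fpot_def by (simp add: power_le_one)

lemma fpot_bnd: "0 \<le> th \<Longrightarrow> th \<le> 1 \<Longrightarrow> \<bar>fpot th x c\<bar> \<le> 1"
  using fpot_nonneg[of th x c] fpot_le1[of th x c] by (simp add: abs_le_iff)

lemma expect_sstep:
  fixes f :: "(nat \<Rightarrow> nat) \<Rightarrow> real"
  assumes px: "prop x" and bnd: "\<And>z. \<bar>f z\<bar> \<le> B"
  shows "measure_pmf.expectation (sstep x) f =
    (\<Sum>v\<in>V. (\<Sum>c'\<in>av x v. f (x(v := c'))) / real (card (av x v))) / real (b + 1)"
proof -
  have "measure_pmf.expectation (sstep x) f =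
     measure_pmf.expectation (pmf_of_set V) (\<lambda>v. measure_pmf.expectation
        (map_pmf (\<lambda>c. x(v := c)) (pmf_of_set (av x v))) f)"
    unfolding sstep_def by (rule expectation_bind_pmf[OF bnd])
  also have "\<dots> = (\<Sum>v\<in>V. measure_pmf.expectation
        (map_pmf (\<lambda>c. x(v := c)) (pmf_of_set (av x v))) f) / real (card V)"
    by (rule integral_pmf_of_set) (auto simp: star_vertices_def)
  also have "\<dots> = (\<Sum>v\<in>V. (\<Sum>c'\<in>av x v. f (x(v := c'))) / real (card (av x v))) / real (b + 1)"
  proof -
    have "measure_pmf.expectation (map_pmf (\<lambda>c. x(v := c)) (pmf_of_set (av x v))) f
        = (\<Sum>c'\<in>av x v. f (x(v := c'))) / real (card (av x v))" if v: "v \<in> V" for v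
    proof -
      have "measure_pmf.expectation (map_pmf (\<lambda>c. x(v := c)) (pmf_of_set (av x v))) f
          = measure_pmf.expectation (pmf_of_set (av x v)) (\<lambda>c. f (x(v := c)))" by simp
      also have "\<dots> = (\<Sum>c'\<in>av x v. f (x(v := c'))) / real (card (av x v))"
        by (rule integral_pmf_of_set) (use avail_ne[OF px v] avail_fin in auto)
      finally show ?thesis .
    qed
    then show ?thesis by (simp add: star_vertices_def)
  qed
  finally show ?thesis .
qed

lemma avg_le:
  fixes g :: "nat \<Rightarrow> real"
  assumes "finite A" "A \<noteq> {}" "\<And>c. c \<in> A \<Longrightarrow> g c \<le> M"
  shows "(\<Sum>c\<in>A. g c) / real (card A) \<le> M"
proof -
  have "(\<Sum>c\<in>A. g c) \<le> (\<Sum>c\<in>A. M)" by (rule sum_mono) (use assms in auto)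
  then have "(\<Sum>c\<in>A. g c) \<le> real (card A) * M" by simp
  moreover have "card A > 0" using assms by (simp add: card_gt_0_iff)
  ultimately show ?thesis by (simp add: divide_le_eq mult.commute)
qed

lemma avg_aux: "(K::real) > 0 \<Longrightarrow> (a + (K - 1) * c) / K = 1 / K * a + (1 - 1 / K) * c"
  by (simp add: field_simps)

lemma color_step:
  assumes px: "prop x" and c: "c < k" and th: "0 \<le> th" "th \<le> 1"
  shows "measure_pmf.expectation (sstep x) (\<lambda>z. fpot th z c)
     \<le> lamf th * fpot (nxt th) x c + of_bool (x 0 = c \<and> free x) / real (b + 1)"
proof -
  let ?T = "\<lambda>v. (\<Sum>c'\<in>av x v. fpot th (x(v := c')) c) / real (card (av x v))"
  have E: "measure_pmf.expectation (sstep x) (\<lambda>z. fpot th z c) = (\<Sum>v\<in>V. ?T v) / real (b + 1)"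
    by (rule expect_sstep[OF px fpot_bnd[OF th]])
  have Vsplit: "V = insert 0 {1..b}" by (auto simp: star_vertices_def)
  have sumT: "(\<Sum>v\<in>V. ?T v) = ?T 0 + (\<Sum>v\<in>{1..b}. ?T v)"
    unfolding Vsplit by (subst sum.insert) auto
  have V0: "0 \<in> V" by (simp add: star_vertices_def)
  show ?thesis
  proof (cases "x 0 = c")
    case True
    have leaf0: "?T v = 0" if v: "v \<in> {1..b}" for v
    proof -
      have "fpot th (x(v := c')) c = 0" for c' using True v by (simp add: fpot_def)
      then show ?thesis by simp
    qed
    have root: "?T 0 \<le> of_bool (free x)"
    proof (cases "free x")
      case True
      have "?T 0 \<le> 1"
        by (rule avg_le) (use avail_fin avail_ne[OF px V0] fpot_le1[OF th] in auto)
      then show ?thesis using True by simp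
    next
      case False
      then have "av x 0 = {c}" using nofree_avail[OF px] \<open>x 0 = c\<close> by simp
      then show ?thesis by (simp add: fpot_def)
    qed
    have "(\<Sum>v\<in>V. ?T v) \<le> of_bool (free x)" using sumT leaf0 root by simp
    then have "measure_pmf.expectation (sstep x) (\<lambda>z. fpot th z c) \<le> of_bool (free x) / real (b + 1)"
      unfolding E by (intro divide_right_mono) auto
    then show ?thesis using True by (simp add: fpot_def)
  next
    case False
    define m where "m = cnt x c"
    have root: "?T 0 \<le> th ^ m"
      by (rule avg_le) (use avail_fin avail_ne[OF px V0] th in \<open>auto simp: fpot_def cnt_upd_root m_def\<close>)
    have leafT: "?T v = pp * th ^ ((cnt x c - (if x v = c then 1 else 0)) + 1)
        + (1 - pp) * th ^ (cnt x c - (if x v = c then 1 else 0))" if v: "v \<in> {1..b}" for v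
    proof -
      define m' where "m' = cnt x c - (if x v = c then 1 else 0)"
      have A: "av x v = {0..<k} - {x 0}" using avail_leaf[OF v] .
      have cA: "c \<in> av x v" using A c False by auto
      have cardA: "card (av x v) = k - 1" using card_avail_leaf[OF px v] .
      have fv: "fpot th (x(v := c')) c = th ^ ((if c' = c then 1 else 0) + m')" for c'
        using v False unfolding fpot_def m'_def by (simp add: cnt_upd_leaf[OF v])
      have "(\<Sum>c'\<in>av x v. fpot th (x(v := c')) c) =
          fpot th (x(v := c)) c + (\<Sum>c'\<in>av x v - {c}. fpot th (x(v := c')) c)"
        using cA avail_fin by (simp add: sum.remove)
      also have "\<dots> = th ^ (m' + 1) + real (k - 2) * th ^ m'"
      proof -
        have "(\<Sum>c'\<in>av x v - {c}. fpot th (x(v := c')) c) = (\<Sum>c'\<in>av x v - {c}. th ^ m')"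
          by (rule sum.cong) (auto simp: fv)
        also have "\<dots> = real (card (av x v - {c})) * th ^ m'" by simp
        also have "card (av x v - {c}) = k - 2" using cA cardA avail_fin by (simp add: card_Diff_singleton)
        finally have "(\<Sum>c'\<in>av x v - {c}. fpot th (x(v := c')) c) = real (k - 2) * th ^ m'" .
        moreover have "fpot th (x(v := c)) c = th ^ (m' + 1)" using fv[of c] by simp
        ultimately show ?thesis by simp
      qed
      finally have sm: "(\<Sum>c'\<in>av x v. fpot th (x(v := c')) c) = th ^ (m' + 1) + real (k - 2) * th ^ m'" .
      have k1: "real (k - 1) > 0" using k3 by simp
      have k2: "real (k - 2) = real (k - 1) - 1" using k3 by simp
      have "?T v = (th ^ (m' + 1) + real (k - 2) * th ^ m') / real (k - 1)"
        using sm cardA by simp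
      also have "\<dots> = pp * th ^ (m' + 1) + (1 - pp) * th ^ m'"
        unfolding pp_def k2 using avg_aux[OF k1] by simp
      finally show ?thesis unfolding m'_def .
    qed
    define S where "S = {v\<in>{1..b}. x v = c}"
    have cS: "card S = m" unfolding S_def m_def cnt_def ..
    have cS2: "card ({1..b} - S) = b - m"
      using cS by (subst card_Diff_subset) (auto simp: S_def)
    have "(\<Sum>v\<in>{1..b}. ?T v) = (\<Sum>v\<in>{1..b}. if x v = c then
          pp * th ^ m + (1 - pp) * th ^ (m - 1) else pp * th ^ (m + 1) + (1 - pp) * th ^ m)"
    proof (rule sum.cong[OF refl])
      fix v assume v: "v \<in> {1..b}"
      show "?T v = (if x v = c then pp * th ^ m + (1 - pp) * th ^ (m - 1)
                    else pp * th ^ (m + 1) + (1 - pp) * th ^ m)"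
      proof (cases "x v = c")
        case True
        then have "v \<in> {i\<in>{1..b}. x i = c}" using v by simp
        then have "card {i\<in>{1..b}. x i = c} \<noteq> 0" by (auto simp: card_eq_0_iff)
        then have "m \<ge> 1" unfolding m_def cnt_def by linarith
        then show ?thesis using leafT[OF v] True by (simp add: m_def)
      next
        case False then show ?thesis using leafT[OF v] by (simp add: m_def)
      qed
    qed
    also have "\<dots> = real m * (pp * th ^ m + (1 - pp) * th ^ (m - 1))
        + real (b - m) * (pp * th ^ (m + 1) + (1 - pp) * th ^ m)"
    proof -
      have e1: "{1..b} \<inter> {v. x v = c} = S" by (auto simp: S_def)
      have e2: "{1..b} \<inter> - {v. x v = c} = {1..b} - S" by (auto simp: S_def)
      show ?thesis unfolding sum.If_cases[OF finite_atLeastAtMost] e1 e2 sum_constant cS cS2 by simp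
    qed
    finally have sl: "(\<Sum>v\<in>{1..b}. ?T v) = real m * (pp * th ^ m + (1 - pp) * th ^ (m - 1))
        + real (b - m) * (pp * th ^ (m + 1) + (1 - pp) * th ^ m)" .
    have alg: "th ^ m + real m * (pp * th ^ m + (1 - pp) * th ^ (m - 1))
          + real (b - m) * (pp * th ^ (m + 1) + (1 - pp) * th ^ m)
         \<le> real (b + 1) * lamf th * nxt th ^ m"
      unfolding lamf_def nxt_def
      by (rule alg_ineq[OF pp_pos pp_half th]) (simp add: m_def cnt_le)
    have "(\<Sum>v\<in>V. ?T v) \<le> real (b + 1) * lamf th * nxt th ^ m"
      using sumT sl root alg by linarith
    then have "measure_pmf.expectation (sstep x) (\<lambda>z. fpot th z c) \<le> lamf th * nxt th ^ m"
      unfolding E by (simp add: divide_le_eq mult.commute mult.left_commute)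
    moreover have "fpot (nxt th) x c = nxt th ^ m" using False by (simp add: fpot_def m_def)
    ultimately show ?thesis using False by simp
  qed
qed

definition Zf :: "real \<Rightarrow> (nat \<Rightarrow> nat) \<Rightarrow> real" where
  "Zf th x = (\<Sum>c<k. fpot th x c)"

lemma Zf_nonneg: "0 \<le> th \<Longrightarrow> 0 \<le> Zf th x"
  unfolding Zf_def by (intro sum_nonneg fpot_nonneg)

lemma Zf_le: "0 \<le> th \<Longrightarrow> th \<le> 1 \<Longrightarrow> Zf th x \<le> real k"
proof -
  assume th: "0 \<le> th" "th \<le> 1"
  have "Zf th x \<le> (\<Sum>c<k. 1)" unfolding Zf_def by (intro sum_mono fpot_le1 th)
  then show ?thesis by simp
qed

lemma Zf_bnd: "0 \<le> th \<Longrightarrow> th \<le> 1 \<Longrightarrow> \<bar>Zf th x\<bar> \<le> real k"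
  using Zf_nonneg[of th x] Zf_le[of th x] by (simp add: abs_le_iff)

lemma free_le_Zf:
  assumes "0 \<le> th" shows "of_bool (free x) \<le> Zf th x"
proof (cases "free x")
  case True
  then obtain d where d: "d < k" "d \<noteq> x 0" "\<forall>i\<in>{1..b}. x i \<noteq> d" unfolding free_def by auto
  have "cnt x d = 0" using d(3) unfolding cnt_def by auto
  then have "fpot th x d = 1" using d(2) by (simp add: fpot_def)
  moreover have "fpot th x d \<le> Zf th x"
    unfolding Zf_def using d(1) by (intro member_le_sum fpot_nonneg assms) auto
  ultimately show ?thesis using True by simp
next
  case False then show ?thesis using Zf_nonneg[OF assms] by simp
qed

lemma lamf_ge: "0 \<le> th \<Longrightarrow> th \<le> 1 \<Longrightarrow> 1 - pp \<le> lamf th"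
proof -
  assume th: "0 \<le> th" "th \<le> 1"
  have "real b * pp / real (b + 1) * (1 - th) \<le> pp * 1"
  proof (intro mult_mono)
    show "real b * pp / real (b + 1) \<le> pp" using pp_pos by (simp add: field_simps)
  qed (use pp_pos th in auto)
  then show ?thesis unfolding lamf_def by linarith
qed

lemma lamf_pos: "0 \<le> th \<Longrightarrow> th \<le> 1 \<Longrightarrow> 0 < lamf th"
  using lamf_ge[of th] pp_half by linarith

lemma nxt_props:
  assumes th: "0 \<le> th" "th \<le> 1"
  shows "th \<le> nxt th" "nxt th \<le> 1"
    "(1 - th) * (1 - 1 / (real (b + 1) * (1 - pp))) \<le> 1 - nxt th"
proof -
  have lp: "0 < lamf th" by (rule lamf_pos[OF th])
  have L: "real (b + 1) * lamf th = 1 + real b * (1 - pp) + real b * pp * th"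
    unfolding lamf_def by (simp add: field_simps)
  define r where "r = ((1 - pp) + pp * th) / (real (b + 1) * lamf th)"
  have num: "0 \<le> (1 - pp) + pp * th" "(1 - pp) + pp * th \<le> 1"
    using pp_pos pp_half th by (auto simp: mult_le_one)
  have den: "0 < real (b + 1) * lamf th" using lp by simp
  have r0: "0 \<le> r" unfolding r_def using num den by simp
  have "(1 - pp) + pp * th \<le> real (b + 1) * lamf th"
  proof -
    have "0 \<le> real b * (1 - pp)" using pp_half by simp
    moreover have "0 \<le> real b * pp * th" using pp_pos th by simp
    ultimately show ?thesis unfolding L using num by linarith
  qed
  then have r1: "r \<le> 1" unfolding r_def using den by (simp add: divide_le_eq)
  have nx: "nxt th = th + (1 - th) * r" unfolding nxt_def r_def by simp
  show "th \<le> nxt th" unfolding nx using th r0 by simp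
  have "(1 - th) * r \<le> (1 - th) * 1" using th r1 by (intro mult_left_mono) auto
  then show "nxt th \<le> 1" unfolding nx by simp
  have "r \<le> 1 / (real (b + 1) * (1 - pp))"
  proof -
    have "real (b + 1) * (1 - pp) \<le> real (b + 1) * lamf th"
      using lamf_ge[OF th] by (intro mult_left_mono) auto
    moreover have "0 < real (b + 1) * (1 - pp)" using pp_half by simp
    moreover have "0 < real (b + 1) * lamf th * (real (b + 1) * (1 - pp))"
      using lp pp_half by (intro mult_pos_pos) auto
    ultimately have "1 / (real (b + 1) * lamf th) \<le> 1 / (real (b + 1) * (1 - pp))"
      by (intro divide_left_mono) auto
    moreover have "r \<le> 1 / (real (b + 1) * lamf th)"
      unfolding r_def using num den by (simp add: divide_right_mono)
    ultimately show ?thesis by linarith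
  qed
  then have "(1 - th) * r \<le> (1 - th) * (1 / (real (b + 1) * (1 - pp)))"
    using th by (intro mult_left_mono) auto
  then show "(1 - th) * (1 - 1 / (real (b + 1) * (1 - pp))) \<le> 1 - nxt th"
    unfolding nx by (simp add: algebra_simps)
qed

lemma Z_step:
  assumes px: "prop x" and th: "0 \<le> th" "th \<le> 1"
  shows "measure_pmf.expectation (sstep x) (Zf th) \<le> (lamf th + 1 / real (b + 1)) * Zf (nxt th) x"
proof -
  have nx: "0 \<le> nxt th" using nxt_props(1)[OF th] th by linarith
  have "measure_pmf.expectation (sstep x) (Zf th) =
      (\<Sum>c<k. measure_pmf.expectation (sstep x) (\<lambda>z. fpot th z c))"
    unfolding Zf_def
    by (rule Bochner_Integration.integral_sum) (rule integrable_bnd_pmf[OF fpot_bnd[OF th]])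
  also have "\<dots> \<le> (\<Sum>c<k. lamf th * fpot (nxt th) x c + of_bool (x 0 = c \<and> free x) / real (b + 1))"
    by (rule sum_mono) (rule color_step[OF px _ th], simp)
  also have "\<dots> = lamf th * Zf (nxt th) x + (\<Sum>c<k. of_bool (x 0 = c \<and> free x)) / real (b + 1)"
    unfolding Zf_def by (simp only: sum.distrib sum_distrib_left sum_divide_distrib)
  also have "(\<Sum>c<k. of_bool (x 0 = c \<and> free x) :: real) = of_bool (free x)"
  proof (cases "free x")
    case True
    then have "(\<Sum>c<k. of_bool (x 0 = c \<and> free x) :: real) = (\<Sum>c<k. if c = x 0 then 1 else 0)"
      by (intro sum.cong) auto
    also have "\<dots> = 1" using prop_root[OF px] by (simp add: sum.delta)
    finally show ?thesis using True by simp
  qed simp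
  also have "of_bool (free x) / real (b + 1) \<le> Zf (nxt th) x / real (b + 1)"
    using free_le_Zf[OF nx] by (intro divide_right_mono) auto
  finally show ?thesis by (simp add: algebra_simps)
qed

lemma marg:
  assumes "prop (fst z)" "prop (snd z)" "proj = fst \<or> proj = snd"
  shows "map_pmf proj (coupled_step b Q z) = sstep (proj z)"
proof -
  obtain x y where z: "z = (x, y)" by force
  show ?thesis using assms marg_fst[of x y] marg_snd[of x y] z by auto
qed

lemma expect_dist_Suc:
  fixes f :: "(nat \<Rightarrow> nat) \<times> (nat \<Rightarrow> nat) \<Rightarrow> real"
  assumes "\<And>z. \<bar>f z\<bar> \<le> B"
  shows "measure_pmf.expectation (coupled_dist b Q x0 y0 (Suc s)) f =
    measure_pmf.expectation (coupled_dist b Q x0 y0 s) (\<lambda>z. measure_pmf.expectation (coupled_step b Q z) f)"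
  unfolding coupled_dist.simps by (rule expectation_bind_pmf[OF assms])

primrec thseq :: "nat \<Rightarrow> real" where
  "thseq 0 = 0"
| "thseq (Suc j) = nxt (thseq j)"

lemma thseq_bnd: "0 \<le> thseq j \<and> thseq j \<le> 1"
proof (induction j)
  case 0 then show ?case by simp
next
  case (Suc j)
  then have "thseq j \<le> nxt (thseq j)" "nxt (thseq j) \<le> 1" using nxt_props[of "thseq j"] by auto
  then show ?case using Suc by simp
qed

lemma Z_iter:
  assumes p0: "prop x0" "prop y0" and proj: "proj = fst \<or> proj = snd"
  shows "j \<le> t \<Longrightarrow> measure_pmf.expectation (coupled_dist b Q x0 y0 t) (\<lambda>z. Zf 0 (proj z))
    \<le> (\<Prod>i<j. lamf (thseq i) + 1 / real (b + 1)) *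
       measure_pmf.expectation (coupled_dist b Q x0 y0 (t - j)) (\<lambda>z. Zf (thseq j) (proj z))"
proof (induction j)
  case 0 then show ?case by simp
next
  case (Suc j)
  define s where "s = t - Suc j"
  have ts: "t - j = Suc s" using Suc.prems unfolding s_def by simp
  have th: "0 \<le> thseq j" "thseq j \<le> 1" using thseq_bnd by auto
  have th': "0 \<le> thseq (Suc j)" "thseq (Suc j) \<le> 1" using thseq_bnd[of "Suc j"] by blast+
  let ?c = "lamf (thseq j) + 1 / real (b + 1)"
  have c0: "0 \<le> ?c" using lamf_pos[OF th] by simp
  have "measure_pmf.expectation (coupled_dist b Q x0 y0 (t - j)) (\<lambda>z. Zf (thseq j) (proj z))
     = measure_pmf.expectation (coupled_dist b Q x0 y0 s)
         (\<lambda>z. measure_pmf.expectation (coupled_step b Q z) (\<lambda>z. Zf (thseq j) (proj z)))"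
    unfolding ts by (rule expect_dist_Suc[OF Zf_bnd[OF th]])
  also have "\<dots> \<le> measure_pmf.expectation (coupled_dist b Q x0 y0 s)
         (\<lambda>z. ?c * Zf (thseq (Suc j)) (proj z))"
  proof (rule expectation_mono_supp[where B="real k" and B'="?c * real k"])
    fix z assume z: "z \<in> set_pmf (coupled_dist b Q x0 y0 s)"
    have pz: "prop (fst z)" "prop (snd z)" using dist_supp[OF p0 z] by auto
    have pp': "prop (proj z)" using pz proj by auto
    have "measure_pmf.expectation (coupled_step b Q z) (\<lambda>z. Zf (thseq j) (proj z))
        = measure_pmf.expectation (map_pmf proj (coupled_step b Q z)) (Zf (thseq j))" by simp
    also have "\<dots> = measure_pmf.expectation (sstep (proj z)) (Zf (thseq j))"
      using marg[OF pz proj] by simp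
    also have "\<dots> \<le> ?c * Zf (thseq (Suc j)) (proj z)"
      using Z_step[OF pp' th] by simp
    finally show "measure_pmf.expectation (coupled_step b Q z) (\<lambda>z. Zf (thseq j) (proj z))
        \<le> ?c * Zf (thseq (Suc j)) (proj z)" .
  next
    fix z show "\<bar>measure_pmf.expectation (coupled_step b Q z) (\<lambda>z. Zf (thseq j) (proj z))\<bar> \<le> real k"
    proof -
      have "\<bar>measure_pmf.expectation (coupled_step b Q z) (\<lambda>z. Zf (thseq j) (proj z))\<bar>
          \<le> measure_pmf.expectation (coupled_step b Q z) (\<lambda>z. \<bar>Zf (thseq j) (proj z)\<bar>)"
        by (rule integral_abs_bound)
      also have "\<dots> \<le> real k"
        by (rule expectation_le_const_supp[where B="real k"]) (use Zf_bnd[OF th] in auto)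
      finally show ?thesis .
    qed
  next
    fix z show "\<bar>?c * Zf (thseq (Suc j)) (proj z)\<bar> \<le> ?c * real k"
      using Zf_bnd[OF th', of "proj z"] c0 by (simp add: abs_mult mult_left_mono)
  qed
  also have "\<dots> = ?c * measure_pmf.expectation (coupled_dist b Q x0 y0 (t - Suc j))
         (\<lambda>z. Zf (thseq (Suc j)) (proj z))" unfolding s_def by simp
  finally have step: "measure_pmf.expectation (coupled_dist b Q x0 y0 (t - j)) (\<lambda>z. Zf (thseq j) (proj z))
      \<le> ?c * measure_pmf.expectation (coupled_dist b Q x0 y0 (t - Suc j)) (\<lambda>z. Zf (thseq (Suc j)) (proj z))" .
  have P0: "0 \<le> (\<Prod>i<j. lamf (thseq i) + 1 / real (b + 1))"
  proof (intro prod_nonneg)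
    fix i have "0 < lamf (thseq i)" using lamf_pos thseq_bnd by blast
    then show "0 \<le> lamf (thseq i) + 1 / real (b + 1)" by simp
  qed
  have "measure_pmf.expectation (coupled_dist b Q x0 y0 t) (\<lambda>z. Zf 0 (proj z))
    \<le> (\<Prod>i<j. lamf (thseq i) + 1 / real (b + 1)) *
       measure_pmf.expectation (coupled_dist b Q x0 y0 (t - j)) (\<lambda>z. Zf (thseq j) (proj z))"
    using Suc by simp
  also have "\<dots> \<le> (\<Prod>i<j. lamf (thseq i) + 1 / real (b + 1)) *
       (?c * measure_pmf.expectation (coupled_dist b Q x0 y0 (t - Suc j)) (\<lambda>z. Zf (thseq (Suc j)) (proj z)))"
    by (rule mult_left_mono[OF step P0])
  finally show ?case by (simp add: mult.assoc)
qed

lemma free_prob: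
  assumes p0: "prop x0" "prop y0" and proj: "proj = fst \<or> proj = snd" and Lt: "L \<le> t"
  shows "measure_pmf.expectation (coupled_dist b Q x0 y0 t) (\<lambda>z. of_bool (free (proj z)))
     \<le> real k * (\<Prod>i<L. lamf (thseq i) + 1 / real (b + 1))"
proof -
  let ?P = "(\<Prod>i<L. lamf (thseq i) + 1 / real (b + 1))"
  have P0: "0 \<le> ?P"
  proof (intro prod_nonneg)
    fix i have "0 < lamf (thseq i)" using lamf_pos thseq_bnd by blast
    then show "0 \<le> lamf (thseq i) + 1 / real (b + 1)" by simp
  qed
  have thL: "0 \<le> thseq L" "thseq L \<le> 1" using thseq_bnd[of L] by blast+
  have "measure_pmf.expectation (coupled_dist b Q x0 y0 t) (\<lambda>z. of_bool (free (proj z)))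
      \<le> measure_pmf.expectation (coupled_dist b Q x0 y0 t) (\<lambda>z. Zf 0 (proj z))"
    by (rule expectation_mono_supp[where B=1 and B'="real k"]) (use free_le_Zf Zf_bnd in auto)
  also have "\<dots> \<le> ?P * measure_pmf.expectation (coupled_dist b Q x0 y0 (t - L)) (\<lambda>z. Zf (thseq L) (proj z))"
    by (rule Z_iter[OF p0 proj Lt])
  also have "\<dots> \<le> ?P * real k"
  proof (rule mult_left_mono[OF _ P0])
    show "measure_pmf.expectation (coupled_dist b Q x0 y0 (t - L)) (\<lambda>z. Zf (thseq L) (proj z)) \<le> real k"
      by (rule expectation_le_const_supp[where B="real k"]) (use Zf_bnd[OF thL] Zf_le[OF thL] in auto)
  qed
  finally show ?thesis by (simp add: mult.commute)
qed

definition rho :: real where "rho = real b / real (b + 1)"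

lemma rho_bnd: "0 \<le> rho" "rho \<le> 1" unfolding rho_def by auto

lemma abs_add_le2: "\<bar>a::real\<bar> \<le> 1 \<Longrightarrow> 0 \<le> c \<Longrightarrow> c \<le> 1 \<Longrightarrow> \<bar>a + c\<bar> \<le> 2"
  by (simp add: abs_le_iff)

lemma B_iter:
  assumes p0: "prop x0" "prop y0"
  shows "j \<le> T \<Longrightarrow> measure_pmf.expectation (coupled_dist b Q x0 y0 T) (\<lambda>z. min 1 (nbad z))
    \<le> measure_pmf.expectation (coupled_dist b Q x0 y0 (T - j)) (\<lambda>z. min 1 (rho ^ j * nbad z))
     + (\<Sum>i<j. measure_pmf.expectation (coupled_dist b Q x0 y0 (T - Suc i))
          (\<lambda>z. of_bool (free (fst z) \<or> free (snd z))) / real (b + 1))"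
proof (induction j)
  case 0 then show ?case by simp
next
  case (Suc j)
  define s where "s = T - Suc j"
  have ts: "T - j = Suc s" using Suc.prems unfolding s_def by simp
  have a: "0 \<le> rho ^ j" using rho_bnd by simp
  have a': "0 \<le> rho ^ Suc j" using rho_bnd by simp
  let ?G = "\<lambda>z. of_bool (free (fst z) \<or> free (snd z)) / real (b + 1)"
  have "measure_pmf.expectation (coupled_dist b Q x0 y0 (T - j)) (\<lambda>z. min 1 (rho ^ j * nbad z))
     = measure_pmf.expectation (coupled_dist b Q x0 y0 s)
         (\<lambda>z. measure_pmf.expectation (coupled_step b Q z) (\<lambda>z. min 1 (rho ^ j * nbad z)))"
    unfolding ts by (rule expect_dist_Suc[OF min1_bnd[OF a]])
  also have "\<dots> \<le> measure_pmf.expectation (coupled_dist b Q x0 y0 s)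
         (\<lambda>z. min 1 (rho ^ Suc j * nbad z) + ?G z)"
  proof (rule expectation_mono_supp[where B=1 and B'=2])
    fix z assume z: "z \<in> set_pmf (coupled_dist b Q x0 y0 s)"
    obtain x y where zz: "z = (x, y)" by force
    have pz: "prop x" "prop y" using dist_supp[OF p0 z] zz by auto
    have eq: "rho ^ j * (real b / real (b + 1)) = rho ^ Suc j" unfolding rho_def by simp
    have h: "measure_pmf.expectation (coupled_step b Q (x, y)) (\<lambda>z. min 1 (rho ^ j * nbad z))
       \<le> min 1 (rho ^ Suc j * nbad (x, y)) + of_bool (free x \<or> free y) / real (b + 1)"
      using B_step[OF pz a] unfolding eq .
    show "measure_pmf.expectation (coupled_step b Q z) (\<lambda>z. min 1 (rho ^ j * nbad z))
        \<le> min 1 (rho ^ Suc j * nbad z) + ?G z" unfolding zz fst_conv snd_conv by (rule h)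
  next
    fix z show "\<bar>measure_pmf.expectation (coupled_step b Q z) (\<lambda>z. min 1 (rho ^ j * nbad z))\<bar> \<le> 1"
    proof -
      have "\<bar>measure_pmf.expectation (coupled_step b Q z) (\<lambda>z. min 1 (rho ^ j * nbad z))\<bar>
          \<le> measure_pmf.expectation (coupled_step b Q z) (\<lambda>z. \<bar>min 1 (rho ^ j * nbad z)\<bar>)"
        by (rule integral_abs_bound)
      also have "\<dots> \<le> 1"
        by (rule expectation_le_const_supp[where B=1]) (use min1_bnd[OF a] in auto)
      finally show ?thesis .
    qed
  next
    fix z
    have g: "0 \<le> ?G z" "?G z \<le> 1" by auto
    show "\<bar>min 1 (rho ^ Suc j * nbad z) + ?G z\<bar> \<le> 2"
      by (rule abs_add_le2[OF min1_bnd[OF a', of z] g])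
  qed
  also have "\<dots> = measure_pmf.expectation (coupled_dist b Q x0 y0 s) (\<lambda>z. min 1 (rho ^ Suc j * nbad z))
      + measure_pmf.expectation (coupled_dist b Q x0 y0 s) ?G"
    by (rule Bochner_Integration.integral_add)
       (rule integrable_bnd_pmf[OF min1_bnd[OF a']], rule integrable_bnd_pmf[where B=1], simp)
  also have "measure_pmf.expectation (coupled_dist b Q x0 y0 s) ?G =
      measure_pmf.expectation (coupled_dist b Q x0 y0 s) (\<lambda>z. of_bool (free (fst z) \<or> free (snd z))) / real (b + 1)"
    by simp
  finally have step: "measure_pmf.expectation (coupled_dist b Q x0 y0 (T - j)) (\<lambda>z. min 1 (rho ^ j * nbad z))
      \<le> measure_pmf.expectation (coupled_dist b Q x0 y0 (T - Suc j)) (\<lambda>z. min 1 (rho ^ Suc j * nbad z))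
       + measure_pmf.expectation (coupled_dist b Q x0 y0 (T - Suc j)) (\<lambda>z. of_bool (free (fst z) \<or> free (snd z))) / real (b + 1)"
    unfolding s_def .
  show ?case using Suc.IH Suc.prems step by simp
qed

lemma prod_bound:
  "(\<Prod>i<L. lamf (thseq i) + 1 / real (b + 1))
     \<le> exp (real L / real (b + 1) - real b * pp * (1 - pp) * (1 - (1 - 1 / (real (b + 1) * (1 - pp))) ^ L))"
proof -
  define g where "g = 1 / (real (b + 1) * (1 - pp))"
  define dl where "dl = 1 / real (b + 1)"
  have pp1: "1/2 \<le> 1 - pp" using pp_half by simp
  have g1: "g \<le> 1"
  proof -
    have "2 * (1/2) \<le> real (b + 1) * (1 - pp)" by (rule mult_mono) (use b1 pp1 in auto)
    then have "1 \<le> real (b + 1) * (1 - pp)" by simp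
    then show ?thesis unfolding g_def by simp
  qed
  have g0: "0 < g" unfolding g_def using pp1 by simp
  have low: "(1 - g) ^ i \<le> 1 - thseq i" for i
  proof (induction i)
    case 0 then show ?case by simp
  next
    case (Suc i)
    have th: "0 \<le> thseq i" "thseq i \<le> 1" using thseq_bnd[of i] by blast+
    have "(1 - g) ^ Suc i = (1 - g) ^ i * (1 - g)" by simp
    also have "\<dots> \<le> (1 - thseq i) * (1 - g)" using Suc g1 by (intro mult_right_mono) auto
    also have "\<dots> \<le> 1 - nxt (thseq i)" using nxt_props(3)[OF th] unfolding g_def by simp
    finally show ?case by simp
  qed
  have fac: "lamf (thseq i) + dl \<le> exp (dl - real b * pp * dl * (1 - thseq i))" for i
  proof -
    have "lamf (thseq i) + dl = 1 + (dl - real b * pp * dl * (1 - thseq i))"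
      unfolding lamf_def dl_def by simp
    then show ?thesis by (simp only:) (rule exp_ge_add_one_self)
  qed
  have "(\<Prod>i<L. lamf (thseq i) + dl) \<le> (\<Prod>i<L. exp (dl - real b * pp * dl * (1 - thseq i)))"
  proof (rule prod_mono)
    fix i assume "i \<in> {..<L}"
    have "0 < lamf (thseq i)" using lamf_pos thseq_bnd by blast
    then show "0 \<le> lamf (thseq i) + dl \<and> lamf (thseq i) + dl \<le> exp (dl - real b * pp * dl * (1 - thseq i))"
      using fac[of i] by (simp add: dl_def)
  qed
  also have "\<dots> = exp (\<Sum>i<L. dl - real b * pp * dl * (1 - thseq i))" by (simp add: exp_sum)
  also have "(\<Sum>i<L. dl - real b * pp * dl * (1 - thseq i)) = real L * dl - real b * pp * dl * (\<Sum>i<L. 1 - thseq i)"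
    by (simp only: sum_subtractf sum_distrib_left[symmetric] sum_constant card_lessThan)
  also have "\<dots> \<le> real L * dl - real b * pp * dl * (\<Sum>i<L. (1 - g) ^ i)"
  proof -
    have "(\<Sum>i<L. (1 - g) ^ i) \<le> (\<Sum>i<L. 1 - thseq i)" by (rule sum_mono) (rule low)
    moreover have "0 \<le> real b * pp * dl" using pp_pos unfolding dl_def by simp
    ultimately show ?thesis by (simp add: mult_left_mono)
  qed
  also have "(\<Sum>i<L. (1 - g) ^ i) = (1 - (1 - g) ^ L) / g"
    using g0 by (simp add: sum_gp_strict)
  also have "real L * dl - real b * pp * dl * ((1 - (1 - g) ^ L) / g) =
      real L / real (b + 1) - real b * pp * (1 - pp) * (1 - (1 - g) ^ L)"
  proof -
    have "dl = (1 - pp) * g" using pp1 unfolding dl_def g_def by simp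
    then have "real b * pp * dl * ((1 - (1 - g) ^ L) / g) = real b * pp * (1 - pp) * (1 - (1 - g) ^ L)"
      using g0 by simp
    then show ?thesis unfolding dl_def by simp
  qed
  finally show ?thesis unfolding dl_def g_def by simp
qed

lemma swap_indicator:
  "indicator (UNIV - swap_event b) z \<le> min 1 (nbad z)"
proof (cases "z \<in> swap_event b")
  case True then show ?thesis using nbad_ge0[of z] by simp
next
  case False
  obtain X Y where z: "z = (X, Y)" by force
  from False obtain i where i: "i \<in> {1..b}" "X i \<noteq> Y i" "\<not> (X i = Y 0 \<and> Y i = X 0)"
    unfolding swap_event_def z by auto
  have "i \<in> badset X Y" using i unfolding badset_def by auto
  then have "card (badset X Y) \<noteq> 0" using badset_fin[of X Y] by (auto simp: card_eq_0_iff)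
  then have "1 \<le> nbad z" unfolding nbad_def z by simp
  then show ?thesis using False by simp
qed

lemma main_bound:
  assumes p0: "prop x0" "prop y0" and LT: "L \<le> T"
  shows "measure_pmf.prob (coupled_dist b Q x0 y0 T) (swap_event b) \<ge>
    1 - (rho ^ (T - L) * real b + real (T - L) * (2 * real k * (\<Prod>i<L. lamf (thseq i) + 1 / real (b + 1))) / real (b + 1))"
proof -
  let ?D = "coupled_dist b Q x0 y0"
  let ?P = "(\<Prod>i<L. lamf (thseq i) + 1 / real (b + 1))"
  have m1: "\<And>z. \<bar>min 1 (nbad z)\<bar> \<le> 1" using min1_bnd[of 1] by simp
  have "measure_pmf.prob (?D T) (UNIV - swap_event b) = measure_pmf.expectation (?D T) (indicator (UNIV - swap_event b))"
    by simp
  also have "\<dots> \<le> measure_pmf.expectation (?D T) (\<lambda>z. min 1 (nbad z))"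
    by (rule expectation_mono_supp[where B=1 and B'=1]) (simp, rule m1, rule swap_indicator)
  also have "\<dots> \<le> measure_pmf.expectation (?D (T - (T - L))) (\<lambda>z. min 1 (rho ^ (T - L) * nbad z))
     + (\<Sum>i<T - L. measure_pmf.expectation (?D (T - Suc i))
          (\<lambda>z. of_bool (free (fst z) \<or> free (snd z))) / real (b + 1))"
    by (rule B_iter[OF p0]) simp
  also have "\<dots> \<le> rho ^ (T - L) * real b + (\<Sum>i<T - L. 2 * real k * ?P / real (b + 1))"
  proof (rule add_mono)
    show "measure_pmf.expectation (?D (T - (T - L))) (\<lambda>z. min 1 (rho ^ (T - L) * nbad z)) \<le> rho ^ (T - L) * real b"
    proof (rule expectation_le_const_supp[where B=1])
      fix z
      have "rho ^ (T - L) * nbad z \<le> rho ^ (T - L) * real b"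
        using nbad_le[of z] rho_bnd by (intro mult_left_mono) auto
      then show "min 1 (rho ^ (T - L) * nbad z) \<le> rho ^ (T - L) * real b" by simp
    qed (rule min1_bnd, use rho_bnd in simp)
  next
    show "(\<Sum>i<T - L. measure_pmf.expectation (?D (T - Suc i))
          (\<lambda>z. of_bool (free (fst z) \<or> free (snd z))) / real (b + 1))
        \<le> (\<Sum>i<T - L. 2 * real k * ?P / real (b + 1))"
    proof (rule sum_mono)
      fix i assume i: "i \<in> {..<T - L}"
      then have Li: "L \<le> T - Suc i" by simp
      have "measure_pmf.expectation (?D (T - Suc i)) (\<lambda>z. of_bool (free (fst z) \<or> free (snd z)))
          \<le> measure_pmf.expectation (?D (T - Suc i)) (\<lambda>z. of_bool (free (fst z)) + of_bool (free (snd z)) :: real)"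
        by (rule expectation_mono_supp[where B=1 and B'=2]) auto
      also have "\<dots> = measure_pmf.expectation (?D (T - Suc i)) (\<lambda>z. of_bool (free (fst z)) :: real)
          + measure_pmf.expectation (?D (T - Suc i)) (\<lambda>z. of_bool (free (snd z)))"
        by (rule Bochner_Integration.integral_add) (rule integrable_bnd_pmf[where B=1], simp)+
      also have "\<dots> \<le> real k * ?P + real k * ?P"
        by (rule add_mono; rule free_prob[OF p0 _ Li]) simp_all
      finally show "measure_pmf.expectation (?D (T - Suc i))
          (\<lambda>z. of_bool (free (fst z) \<or> free (snd z))) / real (b + 1) \<le> 2 * real k * ?P / real (b + 1)"
        by (intro divide_right_mono) auto
    qed
  qed
  also have "(\<Sum>i<T - L. 2 * real k * ?P / real (b + 1)) = real (T - L) * (2 * real k * ?P) / real (b + 1)"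
    by simp
  finally have "measure_pmf.prob (?D T) (UNIV - swap_event b) \<le>
     rho ^ (T - L) * real b + real (T - L) * (2 * real k * ?P) / real (b + 1)" .
  moreover have "measure_pmf.prob (?D T) (UNIV - swap_event b) = 1 - measure_pmf.prob (?D T) (swap_event b)"
    using measure_pmf.prob_compl[of "swap_event b" "?D T"] by simp
  ultimately show ?thesis by linarith
qed

end

lemma ev_ln: "eventually (\<lambda>n::nat. M \<le> ln (real n)) sequentially"
proof -
  have "filterlim (\<lambda>n::nat. ln (real n)) at_top sequentially" by real_asymp
  then show ?thesis unfolding filterlim_at_top by blast
qed

lemma ev_ratio: "eventually (\<lambda>n::nat. M \<le> real n / ln (real n)) sequentially"
proof -
  have "filterlim (\<lambda>n::nat. real n / ln (real n)) at_top sequentially" by real_asymp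
  then show ?thesis unfolding filterlim_at_top by blast
qed

lemma ev_nat: "eventually (\<lambda>n::nat. M \<le> real n) sequentially"
proof -
  have "filterlim (\<lambda>n::nat. real n) at_top sequentially" by (rule filterlim_real_sequentially)
  then show ?thesis unfolding filterlim_at_top by blast
qed

theorem lemma2:
  fixes \<epsilon> :: real
  assumes "\<epsilon> > 0"
  shows "\<forall>\<delta>>0. \<exists>B. \<forall>b\<ge>B. \<forall>Q x0 y0.
           maximal_coupling_choice b (num_colors \<epsilon> b) Q \<longrightarrow>
           proper_coloring b (num_colors \<epsilon> b) x0 \<longrightarrow>
           proper_coloring b (num_colors \<epsilon> b) y0 \<longrightarrow>
           measure_pmf.prob (coupled_dist b Q x0 y0 (T_w b)) (swap_event b) \<ge> 1 - \<delta>"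
proof (intro allI impI)
  fix \<delta> :: real assume d0: "\<delta> > 0"
  have eps: "0 < \<epsilon>" by (rule assms)
  define C where "C = ln (4 * (1 + \<epsilon>) / \<epsilon>)"
  define P0 where "P0 = (\<epsilon> / 4) / (1 + 3 * \<epsilon> / 4)"
  define K0 :: nat where "K0 = max 3 (nat \<lceil>1 / P0\<rceil> + 1)"
  define dd where "dd = \<delta> / (36 * exp (C + 1))"
  have P0pos: "0 < P0" unfolding P0_def using eps by simp
  have dd0: "0 < dd" unfolding dd_def using d0 by simp
  have ev: "eventually (\<lambda>b::nat. 3 \<le> real b \<and> 1 \<le> ln (real b)
      \<and> real K0 * (1 + \<epsilon>) \<le> real b / ln (real b)
      \<and> C \<le> 8 * ln (real b)
      \<and> 2 * exp (C + 1) / \<delta> \<le> real b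
      \<and> (2 / \<epsilon>) * (- ln dd) \<le> ln (real b)) sequentially"
  proof -
    have ev3: "eventually (\<lambda>b::nat. C \<le> 8 * ln (real b)) sequentially"
      by (rule eventually_mono[OF ev_ln[of "C/8"]]) simp
    show ?thesis by (intro eventually_conj ev_nat ev_ln ev_ratio ev3)
  qed
  then obtain N where N: "\<And>b. b \<ge> N \<Longrightarrow> 3 \<le> real b \<and> 1 \<le> ln (real b)
      \<and> real K0 * (1 + \<epsilon>) \<le> real b / ln (real b)
      \<and> C \<le> 8 * ln (real b)
      \<and> 2 * exp (C + 1) / \<delta> \<le> real b
      \<and> (2 / \<epsilon>) * (- ln dd) \<le> ln (real b)"
    unfolding eventually_sequentially by blast
  show "\<exists>B. \<forall>b\<ge>B. \<forall>Q x0 y0.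
           maximal_coupling_choice b (num_colors \<epsilon> b) Q \<longrightarrow>
           proper_coloring b (num_colors \<epsilon> b) x0 \<longrightarrow>
           proper_coloring b (num_colors \<epsilon> b) y0 \<longrightarrow>
           measure_pmf.prob (coupled_dist b Q x0 y0 (T_w b)) (swap_event b) \<ge> 1 - \<delta>"
  proof (intro exI allI impI)
    fix b :: nat and Q x0 y0
    assume bN: "N \<le> b"
      and mcQ: "maximal_coupling_choice b (num_colors \<epsilon> b) Q"
      and px: "proper_coloring b (num_colors \<epsilon> b) x0"
      and py: "proper_coloring b (num_colors \<epsilon> b) y0"
    note cond = N[OF bN]
    define k where "k = num_colors \<epsilon> b"
    define x where "x = real b / ((1 + \<epsilon>) * ln (real b))"
    have lnb: "1 \<le> ln (real b)" using cond by simp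
    have b3: "3 \<le> b" using cond by simp
    have x0': "0 \<le> x" unfolding x_def using lnb eps by simp
    have kdef: "k = nat \<lfloor>x\<rfloor>" unfolding k_def num_colors_def x_def ..
    have xK: "real K0 \<le> x"
    proof -
      have "real K0 * (1 + \<epsilon>) \<le> real b / ln (real b)" using cond by simp
      then have "real K0 * (1 + \<epsilon>) * ln (real b) \<le> real b"
        using pos_le_divide_eq[of "ln (real b)"] lnb by auto
      then have "real K0 * ((1 + \<epsilon>) * ln (real b)) \<le> real b" by (simp add: mult.assoc)
      moreover have "0 < (1 + \<epsilon>) * ln (real b)" using eps lnb by simp
      ultimately show ?thesis unfolding x_def using pos_le_divide_eq by blast
    qed
    have kK: "K0 \<le> k" unfolding kdef using xK by (metis le_nat_floor)
    have k3: "3 \<le> k" using kK unfolding K0_def by simp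
    have kle: "real k \<le> x" unfolding kdef using x0' by simp
    have ppb: "1 / real (k - 1) \<le> P0"
    proof -
      have "nat \<lceil>1 / P0\<rceil> + 1 \<le> k" using kK unfolding K0_def by simp
      then have "1 / P0 \<le> real (k - 1)"
        using nat_ceiling_bounds(1)[of "1 / P0"] P0pos by (simp add: of_nat_diff) linarith
      moreover have "0 < real (k - 1)" using k3 by simp
      ultimately show ?thesis using P0pos by (simp add: divide_le_eq mult.commute)
    qed
    interpret S: star b k Q
      by unfold_locales (use b3 k3 mcQ in \<open>auto simp: k_def\<close>)
    define L where "L = nat \<lceil>C * (real b + 1)\<rceil>"
    define T where "T = nat \<lceil>8 * (real b + 1) * ln (real b)\<rceil>"
    have TT: "T_w b = T" unfolding T_def T_w_def ..
    have num: "L \<le> T"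
      "(real b / real (b + 1)) ^ (T - L) * real b
      + real (T - L) * (2 * real k * exp (real L / real (b + 1) - real b * S.pp * (1 - S.pp) *
           (1 - (1 - 1 / (real (b + 1) * (1 - S.pp))) ^ L))) / real (b + 1)
     \<le> exp (C + 1) * (1 / real b + 18 * exp (- (\<epsilon> / 2) * ln (real b)))"
      using numeric[OF eps b3 k3 _ _ C_def L_def T_def] kle ppb cond
      unfolding x_def P0_def S.pp_def by auto
    have mb: "measure_pmf.prob (coupled_dist b Q x0 y0 T) (swap_event b) \<ge>
      1 - (S.rho ^ (T - L) * real b + real (T - L) * (2 * real k * (\<Prod>i<L. S.lamf (S.thseq i) + 1 / real (b + 1))) / real (b + 1))"
      by (rule S.main_bound[OF _ _ num(1)]) (use px py in \<open>simp_all add: k_def\<close>)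
    have pb: "real (T - L) * (2 * real k * (\<Prod>i<L. S.lamf (S.thseq i) + 1 / real (b + 1))) / real (b + 1)
       \<le> real (T - L) * (2 * real k * exp (real L / real (b + 1) - real b * S.pp * (1 - S.pp) *
           (1 - (1 - 1 / (real (b + 1) * (1 - S.pp))) ^ L))) / real (b + 1)"
      using S.prod_bound[of L] by (intro divide_right_mono mult_left_mono) auto
    have fin: "exp (C + 1) * (1 / real b + 18 * exp (- (\<epsilon> / 2) * ln (real b))) \<le> \<delta>"
    proof -
      have e1: "exp (C + 1) * (1 / real b) \<le> \<delta> / 2"
      proof -
        have "2 * exp (C + 1) / \<delta> \<le> real b" using cond by simp
        then have "2 * exp (C + 1) \<le> \<delta> * real b" using d0 by (simp add: divide_le_eq mult.commute)
        then show ?thesis using b3 by (simp add: field_simps)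
      qed
      have e2: "exp (- (\<epsilon> / 2) * ln (real b)) \<le> dd"
      proof -
        have "(2 / \<epsilon>) * (- ln dd) \<le> ln (real b)" using cond by simp
        then have "- ln dd \<le> (\<epsilon> / 2) * ln (real b)" using eps by (simp add: field_simps)
        then have "- (\<epsilon> / 2) * ln (real b) \<le> ln dd" by simp
        then have "exp (- (\<epsilon> / 2) * ln (real b)) \<le> exp (ln dd)" by simp
        then show ?thesis using dd0 by simp
      qed
      have "exp (C + 1) * (18 * exp (- (\<epsilon> / 2) * ln (real b))) \<le> exp (C + 1) * (18 * dd)"
        using e2 by simp
      also have "\<dots> = \<delta> / 2" unfolding dd_def by simp
      finally have "exp (C + 1) * (18 * exp (- (\<epsilon> / 2) * ln (real b))) \<le> \<delta> / 2" .
      moreover have "exp (C + 1) * (1 / real b + 18 * exp (- (\<epsilon> / 2) * ln (real b))) =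
         exp (C + 1) * (1 / real b) + exp (C + 1) * (18 * exp (- (\<epsilon> / 2) * ln (real b)))"
        by (rule distrib_left)
      ultimately show ?thesis using e1 by linarith
    qed
    have rr: "S.rho = real b / real (b + 1)" by (rule S.rho_def)
    show "measure_pmf.prob (coupled_dist b Q x0 y0 (T_w b)) (swap_event b) \<ge> 1 - \<delta>"
      using mb pb num(2) fin unfolding TT rr by linarith
  qed
qed

end
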